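(* Let $A=(a_n)_{n=1}^N$ and $B=(b_n)_{n=1}^{N'}$ be elements of $\mathcal A_1$, and let $\{\mathcal P_n\}_{n=1}^N$, $\{\mathcal Q_n\}_{n=1}^{N'}$ be sequences of pyramids. Then for any integer $M\in[\min\{N,N'\}]$, $$\rho\Big(\sum_{n=1}^N\mathcal P_n^{a_n},\sum_{n=1}^{N'}\mathcal Q_n^{b_n}\Big)\le\sum_{n=1}^M\rho(\mathcal P_n,\mathcal Q_n)+\frac12\|A-B\|_1+\frac12\sum_{n=M+1}^N a_n+\frac12\sum_{n=M+1}^{N'}b_n.$$
   Context: An mm-space is a triple $(X,d_X,\mu_X)$ with $(X,d_X)$ complete separable metric and $\mu_X$ a Borel probability measure; $\mathcal X$ is the set of mm-isomorphism classes. $Y\prec X$ means there is a 1-Lipschitz $f:X\to Y$ with $f_*\mu_X=\mu_Y$. The box distance $\square(X,Y)$ is the infimum of $\max\{\operatorname{dis}(S),1-\pi(S)\}$ over couplings $\pi$ of $\mu_X,\mu_Y$ and Borel $S\subset X\times Y$, $\operatorname{dis}(S)=\sup\{|d_X(x,x')-d_Y(y,y')|:(x,y),(x',y')\in S\}$. A pyramid is a nonempty box-closed subset of $\mathcal X$ closed downward under $\prec$ and directed. $\overline{\mathbb N}=\mathbb N\cup\{\infty\}$, $[N]=\{1,\dots,N\}$ or $\mathbb N$. $\mathcal A_1$: sequences $(a_n)_{n=1}^N$, $N\in\overline{\mathbb N}$, with $a_n\in(0,1]$, $\sum a_n=1$. Direct sum $\sum_{n=1}^N\mathcal P_n^{a_n}$: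 set of $X\in\mathcal X$ admitting $X_n\in\mathcal P_n$ and 1-Lipschitz $f_n:X_n\to X$ with $\mu_X=\sum_na_n(f_n)_*\mu_{X_n}$. For $A=(a_n)_{n=1}^N$, $B=(b_n)_{n=1}^{N'}$, $\|A-B\|_1=\sum_{n\le\min(N,N')}|a_n-b_n|+\sum_{n>\min(N,N')}(\text{remaining terms of the longer sequence})$, i.e. the $\ell^1$ distance after padding the shorter sequence with zeros. For a pyramid $\mathcal P$ and $k\in\mathbb N$, $\mathcal M(\mathcal P;k,k)$ is the set of Borel probability measures $\mu$ on $\mathbb R^k$ supported in $B^k_k=\{x:\|x\|_\infty\le k\}$ such that $(B^k_k,\|\cdot\|_\infty,\mu)\in\mathcal P$. The metric $\rho$ on pyramids is $\rho(\mathcal P,\mathcal Q)=\sum_{k=1}^\infty\frac{1}{2^k}\cdot\frac{1}{2k}(d_{\mathrm P})_{\mathrm H}(\mathcal M(\mathcal P;k,k),\mathcal M(\mathcal Q;k,k))$, where $d_{\mathrm P}$ is the Prokhorov distance on Borel probability measures on $(\mathbb R^k,\|\cdot\|_\infty)$ ($d_{\mathrm P}(\mu,\nu)=\inf\{\varepsilon>0:\mu(U_\varepsilon(A))\ge\nu(A)-\varepsilon\ \forall A\text{ Borel}\}$, $U_\varepsilon$ the open $\varepsilon$-neighborhood) and $(d_{\mathrm P})_{\mathrm H}$ the associated Hausdorff distance. *)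

theory Defs
  imports "HOL-Analysis.Analysis" "HOL-Probability.Probability" "HOL-Library.Extended_Nat"
begin

text \<open>A (represented) mm-space over carrier type 'a: a metric d and a measure mu;
  the carrier is space mu.\<close>
type_synonym 'a mms = "('a \<Rightarrow> 'a \<Rightarrow> real) \<times> 'a measure"

definition mborel :: "'a set \<Rightarrow> ('a \<Rightarrow> 'a \<Rightarrow> real) \<Rightarrow> 'a measure" where
  "mborel X d = sigma X {U. openin (Metric_space.mtopology X d) U}"

definition mm_space :: "'a mms \<Rightarrow> bool" where
  "mm_space Xm \<longleftrightarrow> (case Xm of (d, \<mu>) \<Rightarrow>
      Metric_space (space \<mu>) d \<and> Metric_space.mcomplete (space \<mu>) d \<and>
      separable_space (Metric_space.mtopology (space \<mu>) d) \<and>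
      sets \<mu> = sets (mborel (space \<mu>) d) \<and> prob_space \<mu>)"

definition mm_supp :: "'a mms \<Rightarrow> 'a set" where
  "mm_supp Xm = {x \<in> space (snd Xm). \<forall>r>0.
      emeasure (snd Xm) (Metric_space.mball (space (snd Xm)) (fst Xm) x r) > 0}"

definition mm_iso :: "'a mms \<Rightarrow> 'b mms \<Rightarrow> bool" where
  "mm_iso X Y \<longleftrightarrow> (\<exists>f. bij_betw f (mm_supp X) (mm_supp Y) \<and>
      (\<forall>x\<in>mm_supp X. \<forall>x'\<in>mm_supp X. fst Y (f x) (f x') = fst X x x') \<and>
      (\<forall>A\<in>sets (snd Y). measure (snd X) (f -` A \<inter> mm_supp X) = measure (snd Y) A))"

text \<open>The universe of mm-isomorphism classes, represented by full-support mm-spaces whose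
  carrier is a subset of the reals (every complete separable metric space has cardinality at
  most continuum, and every mm-space is isomorphic to the support of its measure).\<close>
definition mmX :: "real mms set" where
  "mmX = {X. mm_space X \<and> mm_supp X = space (snd X)}"

definition lip1 :: "('a \<Rightarrow> 'b) \<Rightarrow> 'a mms \<Rightarrow> 'b mms \<Rightarrow> bool" where
  "lip1 f X Y \<longleftrightarrow> f \<in> space (snd X) \<rightarrow> space (snd Y) \<and>
      (\<forall>x\<in>space (snd X). \<forall>x'\<in>space (snd X). fst Y (f x) (f x') \<le> fst X x x')"

text \<open>Lipschitz order: mm_prec Y X means Y \<prec> X.\<close>
definition mm_prec :: "'b mms \<Rightarrow> 'a mms \<Rightarrow> bool" where
  "mm_prec Y X \<longleftrightarrow> (\<exists>f. lip1 f X Y \<and> f \<in> measurable (snd X) (snd Y) \<and>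
      distr (snd X) (snd Y) f = snd Y)"

definition coupling :: "('a \<times> 'b) measure \<Rightarrow> 'a measure \<Rightarrow> 'b measure \<Rightarrow> bool" where
  "coupling \<pi> \<mu> \<nu> \<longleftrightarrow> prob_space \<pi> \<and> sets \<pi> = sets (\<mu> \<Otimes>\<^sub>M \<nu>) \<and>
      distr \<pi> \<mu> fst = \<mu> \<and> distr \<pi> \<nu> snd = \<nu>"

definition dis :: "'a mms \<Rightarrow> 'b mms \<Rightarrow> ('a \<times> 'b) set \<Rightarrow> ereal" where
  "dis X Y S = (SUP p \<in> S \<times> S.
      ereal \<bar>fst X (fst (fst p)) (fst (snd p)) - fst Y (snd (fst p)) (snd (snd p))\<bar>)"

definition box :: "'a mms \<Rightarrow> 'b mms \<Rightarrow> ereal" where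
  "box X Y = (INF pS \<in> {(\<pi>, S). coupling \<pi> (snd X) (snd Y) \<and> S \<in> sets \<pi>}.
      max (dis X Y (snd pS)) (1 - ereal (measure (fst pS) (snd pS))))"

definition box_closed :: "real mms set \<Rightarrow> bool" where
  "box_closed P \<longleftrightarrow> (\<forall>Xs X. (\<forall>i. Xs i \<in> P) \<and> X \<in> mmX \<and>
      (\<lambda>i. box (Xs i) X) \<longlonglongrightarrow> 0 \<longrightarrow> X \<in> P)"

definition pyramid :: "real mms set \<Rightarrow> bool" where
  "pyramid P \<longleftrightarrow> P \<subseteq> mmX \<and> P \<noteq> {} \<and> box_closed P \<and>
      (\<forall>X\<in>P. \<forall>Y\<in>mmX. mm_prec Y X \<longrightarrow> Y \<in> P) \<and>
      (\<forall>X\<in>P. \<forall>X'\<in>P. \<exists>Y\<in>P. mm_prec X Y \<and> mm_prec X' Y)"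

definition idx :: "enat \<Rightarrow> nat set" where
  "idx N = {n. 1 \<le> n \<and> enat n \<le> N}"

definition in_A1 :: "(nat \<Rightarrow> real) \<Rightarrow> enat \<Rightarrow> bool" where
  "in_A1 a N \<longleftrightarrow> (\<forall>n\<in>idx N. 0 < a n \<and> a n \<le> 1) \<and> (a has_sum 1) (idx N)"

definition pad :: "(nat \<Rightarrow> real) \<Rightarrow> enat \<Rightarrow> nat \<Rightarrow> real" where
  "pad a N n = (if n \<in> idx N then a n else 0)"

definition l1dist :: "(nat \<Rightarrow> real) \<Rightarrow> enat \<Rightarrow> (nat \<Rightarrow> real) \<Rightarrow> enat \<Rightarrow> real" where
  "l1dist a N b N' = infsum (\<lambda>n. \<bar>pad a N n - pad b N' n\<bar>) {1..}"

definition dirsum :: "(nat \<Rightarrow> real mms set) \<Rightarrow> (nat \<Rightarrow> real) \<Rightarrow> enat \<Rightarrow> real mms set" where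
  "dirsum P a N = {X \<in> mmX. \<exists>Xs fs.
      (\<forall>n\<in>idx N. Xs n \<in> P n \<and> lip1 (fs n) (Xs n) X \<and> fs n \<in> measurable (snd (Xs n)) (snd X)) \<and>
      (\<forall>A\<in>sets (snd X).
         ((\<lambda>n. a n * measure (snd (Xs n)) (fs n -` A \<inter> space (snd (Xs n)))) has_sum
            measure (snd X) A) (idx N))}"

text \<open>R^k is represented as functions nat => real vanishing from index k on.\<close>
definition Rk :: "nat \<Rightarrow> (nat \<Rightarrow> real) set" where
  "Rk k = {x. \<forall>i\<ge>k. x i = 0}"

definition dinf :: "nat \<Rightarrow> (nat \<Rightarrow> real) \<Rightarrow> (nat \<Rightarrow> real) \<Rightarrow> real" where
  "dinf k x y = Max ((\<lambda>i. \<bar>x i - y i\<bar>) ` {..<k})"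

definition Bkk :: "nat \<Rightarrow> (nat \<Rightarrow> real) set" where
  "Bkk k = {x \<in> Rk k. \<forall>i<k. \<bar>x i\<bar> \<le> real k}"

definition Mset :: "real mms set \<Rightarrow> nat \<Rightarrow> (nat \<Rightarrow> real) measure set" where
  "Mset P k = {\<mu>. sets \<mu> = sets (mborel (Rk k) (dinf k)) \<and> prob_space \<mu> \<and>
      emeasure \<mu> (Rk k - Bkk k) = 0 \<and>
      (\<exists>X\<in>P. mm_iso X (dinf k, restrict_space \<mu> (Bkk k)))}"

definition nbhd :: "nat \<Rightarrow> real \<Rightarrow> (nat \<Rightarrow> real) set \<Rightarrow> (nat \<Rightarrow> real) set" where
  "nbhd k e A = {x \<in> Rk k. \<exists>y\<in>A. dinf k x y < e}"

definition dP :: "nat \<Rightarrow> (nat \<Rightarrow> real) measure \<Rightarrow> (nat \<Rightarrow> real) measure \<Rightarrow> real" where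
  "dP k \<mu> \<nu> = Inf {e. 0 < e \<and> (\<forall>A\<in>sets \<nu>. measure \<mu> (nbhd k e A) \<ge> measure \<nu> A - e)}"

definition dH :: "nat \<Rightarrow> (nat \<Rightarrow> real) measure set \<Rightarrow> (nat \<Rightarrow> real) measure set \<Rightarrow> real" where
  "dH k S T = max (SUP \<mu>\<in>S. INF \<nu>\<in>T. dP k \<mu> \<nu>) (SUP \<nu>\<in>T. INF \<mu>\<in>S. dP k \<mu> \<nu>)"

definition rho :: "real mms set \<Rightarrow> real mms set \<Rightarrow> real" where
  "rho P Q = (\<Sum>k. (1 / 2 ^ Suc k) * (1 / (2 * real (Suc k))) *
      dH (Suc k) (Mset P (Suc k)) (Mset Q (Suc k)))"

end

theory Submission
  imports Defs
begin

lemma dinf_ge: "i < k \<Longrightarrow> \<bar>x i - y i\<bar> \<le> dinf k x y"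
  unfolding dinf_def by (rule Max_ge) auto

lemma dinf_less_iff: "0 < k \<Longrightarrow> dinf k x y < r \<longleftrightarrow> (\<forall>i<k. \<bar>x i - y i\<bar> < r)"
  unfolding dinf_def by (subst Max_less_iff) auto

lemma dinf_le_iff: "0 < k \<Longrightarrow> dinf k x y \<le> r \<longleftrightarrow> (\<forall>i<k. \<bar>x i - y i\<bar> \<le> r)"
  unfolding dinf_def by (subst Max_le_iff) auto

lemma dinf_nonneg: "0 < k \<Longrightarrow> 0 \<le> dinf k x y"
  using dinf_ge[of 0 k x y] by simp

lemma dinf_commute: "dinf k x y = dinf k y x"
  unfolding dinf_def by (simp add: abs_minus_commute)

lemma metric_Rk: assumes "0 < k" shows "Metric_space (Rk k) (dinf k)"
proof
  fix x y show "0 \<le> dinf k x y" using dinf_nonneg[OF assms] .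
  show "dinf k x y = dinf k y x" by (rule dinf_commute)
next
  fix x y assume x: "x \<in> Rk k" and y: "y \<in> Rk k"
  show "dinf k x y = 0 \<longleftrightarrow> x = y"
  proof
    assume "dinf k x y = 0"
    then have "\<forall>i<k. \<bar>x i - y i\<bar> \<le> 0" using dinf_le_iff[OF assms, of x y 0] by simp
    then have "\<forall>i<k. x i = y i" by auto
    moreover have "\<forall>i\<ge>k. x i = y i" using x y unfolding Rk_def by auto
    ultimately have "\<forall>i. x i = y i" using not_le by blast
    then show "x = y" by auto
  next
    assume "x = y" then show "dinf k x y = 0"
      using dinf_le_iff[OF assms, of x y 0] dinf_nonneg[OF assms, of x y] by simp
  qed
next
  fix x y z assume "x \<in> Rk k" "y \<in> Rk k" "z \<in> Rk k"
  show "dinf k x z \<le> dinf k x y + dinf k y z"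
    unfolding dinf_le_iff[OF assms]
  proof (intro allI impI)
    fix i assume "i < k"
    then have "\<bar>x i - y i\<bar> \<le> dinf k x y" "\<bar>y i - z i\<bar> \<le> dinf k y z" by (auto intro: dinf_ge)
    then show "\<bar>x i - z i\<bar> \<le> dinf k x y + dinf k y z" by linarith
  qed
qed

lemma mcomplete_Rk: assumes "0 < k" shows "Metric_space.mcomplete (Rk k) (dinf k)"
proof -
  interpret Metric_space "Rk k" "dinf k" by (rule metric_Rk[OF assms])
  show ?thesis unfolding mcomplete_def
  proof (intro allI impI)
    fix \<sigma> assume C: "MCauchy \<sigma>"
    have conv: "convergent (\<lambda>n. \<sigma> n i)" if "i < k" for i
    proof -
      have "Cauchy (\<lambda>n. \<sigma> n i)"
      proof (rule CauchyI)
        fix e :: real assume "0 < e"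
        then obtain N where "\<forall>n n'. N \<le> n \<longrightarrow> N \<le> n' \<longrightarrow> dinf k (\<sigma> n) (\<sigma> n') < e"
          using C unfolding MCauchy_def by blast
        then have N: "\<forall>n n'. N \<le> n \<longrightarrow> N \<le> n' \<longrightarrow> dinf k (\<sigma> n) (\<sigma> n') < e" .
        show "\<exists>M. \<forall>m\<ge>M. \<forall>n\<ge>M. norm (\<sigma> m i - \<sigma> n i) < e"
        proof (intro exI[of _ N] allI impI)
          fix m n assume "N \<le> m" "N \<le> n"
          then have "dinf k (\<sigma> m) (\<sigma> n) < e" using N by blast
          then show "norm (\<sigma> m i - \<sigma> n i) < e" using dinf_ge[OF that, of "\<sigma> m" "\<sigma> n"] by simp
        qed
      qed
      then show ?thesis using Cauchy_convergent_iff by blast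
    qed
    define L where "L i = (if i < k then lim (\<lambda>n. \<sigma> n i) else 0)" for i
    have L: "L \<in> Rk k" unfolding L_def Rk_def by auto
    have lim: "(\<lambda>n. \<sigma> n i) \<longlonglongrightarrow> L i" if "i < k" for i
      using conv[OF that] that by (simp add: L_def convergent_LIMSEQ_iff)
    have "limitin mtopology \<sigma> L sequentially"
      unfolding limitin_metric
    proof (intro conjI allI impI L)
      fix e :: real assume e: "0 < e"
      have "\<forall>i\<in>{..<k}. \<forall>\<^sub>F n in sequentially. \<bar>\<sigma> n i - L i\<bar> < e"
        using lim e by (auto simp: tendsto_iff dist_real_def)
      then have "\<forall>\<^sub>F n in sequentially. \<forall>i\<in>{..<k}. \<bar>\<sigma> n i - L i\<bar> < e"
        by (intro eventually_ball_finite) auto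
      then show "\<forall>\<^sub>F n in sequentially. \<sigma> n \<in> Rk k \<and> dinf k (\<sigma> n) L < e"
      proof (rule eventually_mono)
        fix n assume "\<forall>i\<in>{..<k}. \<bar>\<sigma> n i - L i\<bar> < e"
        moreover have "\<sigma> n \<in> Rk k" using C unfolding MCauchy_def by auto
        ultimately show "\<sigma> n \<in> Rk k \<and> dinf k (\<sigma> n) L < e"
          by (auto simp: dinf_less_iff[OF assms])
      qed
    qed
    then show "\<exists>x. limitin mtopology \<sigma> x sequentially" by blast
  qed
qed

lemma mborel_gen_subset: "Metric_space M d \<Longrightarrow> {U. openin (Metric_space.mtopology M d) U} \<subseteq> Pow M"
  using openin_subset Metric_space.topspace_mtopology by fastforce

lemma space_mborel: "Metric_space M d \<Longrightarrow> space (mborel M d) = M"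
  unfolding mborel_def by (rule space_measure_of[OF mborel_gen_subset])

lemma sets_mborel: "Metric_space M d \<Longrightarrow>
   sets (mborel M d) = sigma_sets M {U. openin (Metric_space.mtopology M d) U}"
  unfolding mborel_def by (rule sets_measure_of[OF mborel_gen_subset])

lemma open_in_mborel: "Metric_space M d \<Longrightarrow> openin (Metric_space.mtopology M d) U \<Longrightarrow> U \<in> sets (mborel M d)"
  by (simp add: sets_mborel)

lemma closed_in_mborel: assumes "Metric_space M d" "closedin (Metric_space.mtopology M d) C"
  shows "C \<in> sets (mborel M d)"
proof -
  have "openin (Metric_space.mtopology M d) (M - C)" "C \<subseteq> M"
    using assms by (auto simp: closedin_def Metric_space.topspace_mtopology)
  then have "M - C \<in> sigma_sets M {U. openin (Metric_space.mtopology M d) U}"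
    by (intro sigma_sets.Basic) simp
  then have "M - (M - C) \<in> sigma_sets M {U. openin (Metric_space.mtopology M d) U}"
    by (rule sigma_sets.Compl)
  moreover have "M - (M - C) = C" using \<open>C \<subseteq> M\<close> by auto
  ultimately show ?thesis using assms(1) by (simp add: sets_mborel)
qed

lemma lip_measurable:
  assumes A: "Metric_space A dA" and C: "Metric_space C dC" and s: "sets M = sets (mborel A dA)"
    and f: "f \<in> A \<rightarrow> C" and lip: "\<And>x y. x \<in> A \<Longrightarrow> y \<in> A \<Longrightarrow> dC (f x) (f y) \<le> dA x y"
  shows "f \<in> measurable M (mborel C dC)"
proof -
  have sp: "space M = A" using s space_mborel[OF A] by (metis sets_eq_imp_space_eq)
  have "f \<in> measurable (mborel A dA) (mborel C dC)"
    unfolding mborel_def[of C]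
  proof (rule measurable_measure_of)
    show "{U. openin (Metric_space.mtopology C dC) U} \<subseteq> Pow C" by (rule mborel_gen_subset[OF C])
    show "f \<in> space (mborel A dA) \<rightarrow> C" using f space_mborel[OF A] by simp
    fix U assume "U \<in> {U. openin (Metric_space.mtopology C dC) U}"
    then have U: "openin (Metric_space.mtopology C dC) U" by simp
    have "openin (Metric_space.mtopology A dA) (f -` U \<inter> A)"
      unfolding Metric_space.openin_mtopology[OF A]
    proof (intro conjI allI impI)
      show "f -` U \<inter> A \<subseteq> A" by auto
      fix x assume x: "x \<in> f -` U \<inter> A"
      then obtain r where r: "r > 0" "Metric_space.mball C dC (f x) r \<subseteq> U"
        using U unfolding Metric_space.openin_mtopology[OF C] by blast
      have "Metric_space.mball A dA x r \<subseteq> f -` U \<inter> A"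
      proof
        fix y assume "y \<in> Metric_space.mball A dA x r"
        then have y: "y \<in> A" "dA x y < r" using x by (auto simp: Metric_space.in_mball[OF A])
        then have "f y \<in> Metric_space.mball C dC (f x) r"
          using x f lip[of x y] by (auto simp: Metric_space.in_mball[OF C])
        then show "y \<in> f -` U \<inter> A" using r y by auto
      qed
      then show "\<exists>r>0. Metric_space.mball A dA x r \<subseteq> f -` U \<inter> A" using r by blast
    qed
    then show "f -` U \<inter> space (mborel A dA) \<in> sets (mborel A dA)"
      using open_in_mborel[OF A] space_mborel[OF A] by simp
  qed
  then show ?thesis using measurable_cong_sets[of M "mborel A dA" "mborel C dC" "mborel C dC"] s by simp
qed

lemma mborel_trace:
  assumes M: "Metric_space M d" and S: "S \<in> sets (mborel M d)" "S \<subseteq> M"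
  shows "sets (mborel S d) = sets (restrict_space (mborel M d) S)"
proof -
  interpret Submetric M d S using M S by (simp add: Submetric_def Submetric_axioms_def)
  have MS: "Metric_space S d" by (rule sub.Metric_space_axioms)
  have gen: "{U. openin (Metric_space.mtopology S d) U} = (\<inter>) S ` {U. openin (Metric_space.mtopology M d) U}"
    using mtopology_submetric by (auto simp: openin_subtopology)
  have "sets (restrict_space (mborel M d) S) = (\<inter>) S ` sets (mborel M d)"
    using S space_mborel[OF M] by (simp add: sets_restrict_space Int_absorb1)
  also have "\<dots> = (\<inter>) S ` sigma_sets M {U. openin (Metric_space.mtopology M d) U}"
    by (simp add: sets_mborel[OF M])
  also have "\<dots> = sigma_sets S ((\<inter>) S ` {U. openin (Metric_space.mtopology M d) U})"
    using S by (intro sigma_sets_Int) (auto simp: sets_mborel[OF M])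
  also have "\<dots> = sets (mborel S d)" by (simp add: sets_mborel[OF MS] gen)
  finally show ?thesis by simp
qed

lemma supp_closed:
  assumes M: "Metric_space (space m) d" and s: "sets m = sets (mborel (space m) d)"
  shows "closedin (Metric_space.mtopology (space m) d) (mm_supp (d, m))"
proof -
  let ?M = "space m"
  have "openin (Metric_space.mtopology ?M d) (?M - mm_supp (d, m))"
    unfolding Metric_space.openin_mtopology[OF M]
  proof (intro conjI allI impI)
    show "?M - mm_supp (d, m) \<subseteq> ?M" by auto
    fix x assume x: "x \<in> ?M - mm_supp (d, m)"
    then obtain r where r: "r > 0" "\<not> emeasure m (Metric_space.mball ?M d x r) > 0"
      unfolding mm_supp_def by auto
    have "Metric_space.mball ?M d x r \<subseteq> ?M - mm_supp (d, m)"
    proof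
      fix y assume y: "y \<in> Metric_space.mball ?M d x r"
      then have yM: "y \<in> ?M" "d x y < r" using Metric_space.in_mball[OF M] by auto
      have "Metric_space.mball ?M d y (r - d x y) \<subseteq> Metric_space.mball ?M d x r"
      proof
        fix z assume "z \<in> Metric_space.mball ?M d y (r - d x y)"
        then have z: "z \<in> ?M" "d y z < r - d x y" using Metric_space.in_mball[OF M] by auto
        have "d x z \<le> d x y + d y z" using Metric_space.triangle[OF M] x yM z by blast
        then show "z \<in> Metric_space.mball ?M d x r" using z x Metric_space.in_mball[OF M] by auto
      qed
      then have "emeasure m (Metric_space.mball ?M d y (r - d x y)) \<le> emeasure m (Metric_space.mball ?M d x r)"
        by (rule emeasure_mono) (simp add: s open_in_mborel[OF M] Metric_space.openin_mball[OF M])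
      then have "\<not> emeasure m (Metric_space.mball ?M d y (r - d x y)) > 0" using r(2) by auto
      moreover have "r - d x y > 0" using yM by simp
      moreover have "y \<notin> mm_supp (d, m)"
      proof
        assume "y \<in> mm_supp (d, m)"
        then have "emeasure m (Metric_space.mball ?M d y (r - d x y)) > 0"
          using \<open>r - d x y > 0\<close> unfolding mm_supp_def by auto
        then show False using \<open>\<not> emeasure m (Metric_space.mball ?M d y (r - d x y)) > 0\<close> by simp
      qed
      ultimately show "y \<in> ?M - mm_supp (d, m)" using yM by auto
    qed
    then show "\<exists>r>0. Metric_space.mball ?M d x r \<subseteq> ?M - mm_supp (d, m)" using r by blast
  qed
  moreover have "mm_supp (d, m) \<subseteq> ?M" unfolding mm_supp_def by auto
  ultimately show ?thesis unfolding closedin_def Metric_space.topspace_mtopology[OF M] by blast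
qed

section \<open>Encoding into the reals\<close>

definition enc :: "(nat \<Rightarrow> real) \<Rightarrow> real" where "enc = (SOME e. inj e)"

lemma inj_enc: "inj enc"
proof -
  obtain f :: "nat set \<Rightarrow> real" where f: "bij_betw f UNIV UNIV"
    using nat_sets_eqpoll_reals unfolding eqpoll_def by blast
  define g where "g = inv f"
  have g: "inj g" unfolding g_def using f by (simp add: bij_betw_def inj_on_inv_into)
  have fi: "inj f" using f by (simp add: bij_betw_def)
  define e where "e x = f {prod_encode (i, m) | i m. m \<in> g (x i)}" for x :: "nat \<Rightarrow> real"
  have "inj e"
  proof (rule injI)
    fix x y assume "e x = e y"
    then have E: "{prod_encode (i, m) | i m. m \<in> g (x i)} = {prod_encode (i, m) | i m. m \<in> g (y i)}"
      unfolding e_def using fi by (simp add: inj_eq)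
    have "g (x i) = g (y i)" for i
    proof -
      have "m \<in> g (x i) \<longleftrightarrow> m \<in> g (y i)" for m
      proof -
        have "m \<in> g (x i) \<longleftrightarrow> prod_encode (i, m) \<in> {prod_encode (i, m) | i m. m \<in> g (x i)}" by auto
        also have "\<dots> \<longleftrightarrow> prod_encode (i, m) \<in> {prod_encode (i, m) | i m. m \<in> g (y i)}" using E by simp
        also have "\<dots> \<longleftrightarrow> m \<in> g (y i)" by auto
        finally show ?thesis .
      qed
      then show ?thesis by auto
    qed
    then show "x = y" using g by (auto simp: inj_eq)
  qed
  then show ?thesis unfolding enc_def by (metis someI_ex)
qed

lemma inv_enc [simp]: "inv enc (enc x) = x"
  using inj_enc by simp

lemma sep_from_dense:
  assumes M: "Metric_space M d" and C: "countable C" "C \<subseteq> M"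
    and D: "\<And>x r. x \<in> M \<Longrightarrow> r > 0 \<Longrightarrow> \<exists>c\<in>C. d x c < r"
  shows "separable_space (Metric_space.mtopology M d)"
  unfolding separable_space_def
proof (intro exI[of _ C] conjI)
  show "countable C" by fact
  show "C \<subseteq> topspace (Metric_space.mtopology M d)" using C by (simp add: Metric_space.topspace_mtopology[OF M])
  show "Metric_space.mtopology M d closure_of C = topspace (Metric_space.mtopology M d)"
  proof -
    have "\<forall>x\<in>M. \<forall>r>0. \<exists>y\<in>C. y \<in> M \<and> d x y < r" using D C by (meson subsetD)
    then show ?thesis by (auto simp: Metric_space.metric_closure_of[OF M] Metric_space.topspace_mtopology[OF M]
        Metric_space.in_mball[OF M])
  qed
qed

lemma dense_subset:
  assumes M: "Metric_space M d" and C: "countable C" "C \<subseteq> M"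
    and D: "\<And>x r. x \<in> M \<Longrightarrow> r > 0 \<Longrightarrow> \<exists>c\<in>C. d x c < r" and S: "S \<subseteq> M"
  shows "\<exists>C'. countable C' \<and> C' \<subseteq> S \<and> (\<forall>x\<in>S. \<forall>r>0. \<exists>c\<in>C'. d x c < r)"
proof -
  define p where "p c n = (SOME y. y \<in> S \<and> d c y < 1 / real (Suc n))" for c n
  define C' where "C' = (\<lambda>(c, n). p c n) ` {(c, n). c \<in> C \<and> (\<exists>y\<in>S. d c y < 1 / real (Suc n))}"
  have p: "p c n \<in> S \<and> d c (p c n) < 1 / real (Suc n)" if "\<exists>y\<in>S. d c y < 1 / real (Suc n)" for c n
    using that unfolding p_def by (metis (mono_tags, lifting) someI_ex)
  have "countable C'"
  proof -
    have "countable (C \<times> (UNIV :: nat set))" using C by simp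
    then have "countable {(c, n). c \<in> C \<and> (\<exists>y\<in>S. d c y < 1 / real (Suc n))}"
      by (rule countable_subset[rotated]) auto
    then show ?thesis unfolding C'_def by simp
  qed
  moreover have "C' \<subseteq> S" unfolding C'_def using p by auto
  moreover have "\<exists>c\<in>C'. d x c < r" if x: "x \<in> S" and r: "r > 0" for x r
  proof -
    obtain n where n: "1 / real (Suc n) < r / 2" using r by (metis half_gt_zero nat_approx_posE)
    obtain c where c: "c \<in> C" "d x c < 1 / real (Suc n)" using D[of x "1 / real (Suc n)"] x S by auto
    have ex: "\<exists>y\<in>S. d c y < 1 / real (Suc n)" using x c Metric_space.commute[OF M] by metis
    then have pc: "p c n \<in> S" "d c (p c n) < 1 / real (Suc n)" using p by auto
    have "d x (p c n) \<le> d x c + d c (p c n)"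
      using Metric_space.triangle[OF M] x S c C pc by blast
    then have "d x (p c n) < r" using c pc n by linarith
    moreover have "p c n \<in> C'" unfolding C'_def using c ex by auto
    ultimately show ?thesis by blast
  qed
  ultimately show ?thesis by blast
qed

definition Qk :: "nat \<Rightarrow> (nat \<Rightarrow> real) set" where
  "Qk k = range (\<lambda>l::rat list. \<lambda>i. if i < k \<and> i < length l then real_of_rat (l ! i) else 0)"

lemma Qk: assumes "0 < k"
  shows "countable (Qk k)" "Qk k \<subseteq> Rk k" "\<And>x r. x \<in> Rk k \<Longrightarrow> r > 0 \<Longrightarrow> \<exists>c\<in>Qk k. dinf k x c < r"
proof -
  show "countable (Qk k)" unfolding Qk_def by simp
  show "Qk k \<subseteq> Rk k" unfolding Qk_def Rk_def by auto
  fix x r assume x: "x \<in> Rk k" and r: "(r::real) > 0"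
  have "\<exists>q::rat. \<bar>x i - real_of_rat q\<bar> < r" for i
  proof -
    obtain q where q: "q \<in> \<rat>" "x i - r < q" "q < x i" using Rats_dense_in_real[of "x i - r" "x i"] r by auto
    then obtain q' where "q = real_of_rat q'" by (auto elim: Rats_cases)
    then show ?thesis using q by (intro exI[of _ q']) auto
  qed
  then have qs: "\<bar>x i - real_of_rat (SOME q. \<bar>x i - real_of_rat q\<bar> < r)\<bar> < r" for i
    by (rule someI_ex)
  define l where "l = map (\<lambda>i. SOME q. \<bar>x i - real_of_rat q\<bar> < r) [0..<k]"
  define c where "c = (\<lambda>i. if i < k \<and> i < length l then real_of_rat (l ! i) else 0)"
  have "c \<in> Qk k" unfolding Qk_def c_def by blast
  moreover have "dinf k x c < r"
    unfolding dinf_less_iff[OF assms]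
  proof (intro allI impI)
    fix i assume "i < k"
    then show "\<bar>x i - c i\<bar> < r" using qs[of i] by (simp add: c_def l_def)
  qed
  ultimately show "\<exists>c\<in>Qk k. dinf k x c < r" by blast
qed

lemma dinf_triangle: "0 < k \<Longrightarrow> dinf k x z \<le> dinf k x y + dinf k y z"
  unfolding dinf_le_iff
proof (intro allI impI)
  fix i assume "i < k"
  then have "\<bar>x i - y i\<bar> \<le> dinf k x y" "\<bar>y i - z i\<bar> \<le> dinf k y z" by (auto intro: dinf_ge)
  then show "\<bar>x i - z i\<bar> \<le> dinf k x y + dinf k y z" by linarith
qed

lemma Bkk_subset: "Bkk k \<subseteq> Rk k" unfolding Bkk_def by auto

lemma Rk_minus_Bkk_open:
  assumes k: "0 < k" and x: "x \<in> Rk k - Bkk k"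
  shows "\<exists>r>0. Metric_space.mball (Rk k) (dinf k) x r \<subseteq> Rk k - Bkk k"
proof -
  interpret Metric_space "Rk k" "dinf k" by (rule metric_Rk[OF k])
  obtain i where i: "i < k" "\<bar>x i\<bar> > real k" using x unfolding Bkk_def by auto
  have "mball x (\<bar>x i\<bar> - real k) \<subseteq> Rk k - Bkk k"
  proof
    fix y assume "y \<in> mball x (\<bar>x i\<bar> - real k)"
    then have "y \<in> Rk k" "dinf k x y < \<bar>x i\<bar> - real k" by auto
    moreover have "\<bar>x i - y i\<bar> \<le> dinf k x y" by (rule dinf_ge[OF i(1)])
    ultimately show "y \<in> Rk k - Bkk k" using i unfolding Bkk_def by auto
  qed
  then show ?thesis using i by (intro exI[of _ "\<bar>x i\<bar> - real k"]) auto
qed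

lemma Bkk_closed: assumes k: "0 < k"
  shows "closedin (Metric_space.mtopology (Rk k) (dinf k)) (Bkk k)"
  unfolding closedin_def Metric_space.topspace_mtopology[OF metric_Rk[OF k]]
  using Rk_minus_Bkk_open[OF k] Bkk_subset
  by (auto simp: Metric_space.openin_mtopology[OF metric_Rk[OF k]])

lemma Bkk_sets: "0 < k \<Longrightarrow> Bkk k \<in> sets (mborel (Rk k) (dinf k))"
  by (rule closed_in_mborel[OF metric_Rk Bkk_closed])

lemma nbhd_sets: assumes k: "0 < k" shows "nbhd k e A \<in> sets (mborel (Rk k) (dinf k))"
proof (rule open_in_mborel[OF metric_Rk[OF k]])
  show "openin (Metric_space.mtopology (Rk k) (dinf k)) (nbhd k e A)"
    unfolding Metric_space.openin_mtopology[OF metric_Rk[OF k]]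
  proof (intro conjI allI impI)
    show "nbhd k e A \<subseteq> Rk k" unfolding nbhd_def by auto
    fix x assume "x \<in> nbhd k e A"
    then obtain y where y: "x \<in> Rk k" "y \<in> A" "dinf k x y < e" unfolding nbhd_def by auto
    have "Metric_space.mball (Rk k) (dinf k) x (e - dinf k x y) \<subseteq> nbhd k e A"
    proof
      fix z assume "z \<in> Metric_space.mball (Rk k) (dinf k) x (e - dinf k x y)"
      then have z: "z \<in> Rk k" "dinf k x z < e - dinf k x y"
        by (auto simp: Metric_space.in_mball[OF metric_Rk[OF k]])
      have "dinf k z y \<le> dinf k z x + dinf k x y" by (rule dinf_triangle[OF k])
      then have "dinf k z y < e" using z dinf_commute[of k x z] by linarith
      then show "z \<in> nbhd k e A" using z y unfolding nbhd_def by auto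
    qed
    then show "\<exists>r>0. Metric_space.mball (Rk k) (dinf k) x r \<subseteq> nbhd k e A" using y by (intro exI[of _ "e - dinf k x y"]) auto
  qed
qed

lemma nbhd_mono: "e \<le> e' \<Longrightarrow> nbhd k e A \<subseteq> nbhd k e' A"
  unfolding nbhd_def using less_le_trans by blast

section \<open>Realizing a measure on Rk as a real mm-space\<close>

definition dX :: "nat \<Rightarrow> real \<Rightarrow> real \<Rightarrow> real" where
  "dX k x y = dinf k (inv enc x) (inv enc y)"

lemma dX_enc [simp]: "dX k (enc a) (enc b) = dinf k a b"
  by (simp add: dX_def)

definition realize :: "nat \<Rightarrow> (nat \<Rightarrow> real) measure \<Rightarrow> real mms" where
  "realize k m = (dX k, distr (restrict_space m (mm_supp (dinf k, m)))
      (mborel (enc ` mm_supp (dinf k, m)) (dX k)) enc)"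

definition good :: "nat \<Rightarrow> (nat \<Rightarrow> real) measure \<Rightarrow> bool" where
  "good k m \<longleftrightarrow> 0 < k \<and> sets m = sets (mborel (Rk k) (dinf k)) \<and> prob_space m \<and>
     emeasure m (mm_supp (dinf k, m)) = 1"

lemma metric_enc:
  assumes k: "0 < k" and Sk: "Sk \<subseteq> Rk k"
  shows "Metric_space (enc ` Sk) (dX k)"
proof
  fix x y show "0 \<le> dX k x y" unfolding dX_def by (rule dinf_nonneg[OF k])
  show "dX k x y = dX k y x" unfolding dX_def by (rule dinf_commute)
next
  fix x y assume "x \<in> enc ` Sk" "y \<in> enc ` Sk"
  then obtain a b where ab: "x = enc a" "y = enc b" "a \<in> Sk" "b \<in> Sk" by auto
  then show "dX k x y = 0 \<longleftrightarrow> x = y"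
    using Metric_space.zero[OF metric_Rk[OF k], of a b] Sk inj_enc by (auto simp: inj_eq)
next
  fix x y z show "dX k x z \<le> dX k x y + dX k y z" unfolding dX_def by (rule dinf_triangle[OF k])
qed

context
  fixes k and m :: "(nat \<Rightarrow> real) measure"
  assumes g: "good k m"
begin

abbreviation "Sk \<equiv> mm_supp (dinf k, m)"

lemma g_k: "0 < k" using g by (simp add: good_def)
lemma g_sets: "sets m = sets (mborel (Rk k) (dinf k))" using g by (simp add: good_def)
lemma g_prob: "prob_space m" using g by (simp add: good_def)
lemma g_S1: "emeasure m Sk = 1" using g by (simp add: good_def)
lemma g_space: "space m = Rk k"
  using g_sets space_mborel[OF metric_Rk[OF g_k]] by (metis sets_eq_imp_space_eq)
lemma g_metric: "Metric_space (space m) (dinf k)" using g_space metric_Rk[OF g_k] by simp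
lemma g_S_sub: "Sk \<subseteq> Rk k" unfolding mm_supp_def using g_space by auto
lemma g_S_closed: "closedin (Metric_space.mtopology (Rk k) (dinf k)) Sk"
  using supp_closed[OF g_metric] g_sets g_space by simp
lemma g_S_sets: "Sk \<in> sets m"
  using closed_in_mborel[OF metric_Rk[OF g_k] g_S_closed] g_sets by simp
lemma g_compl_null: "emeasure m (Rk k - Sk) = 0"
proof -
  interpret prob_space m by (rule g_prob)
  have "emeasure m (space m - Sk) = emeasure m (space m) - emeasure m Sk"
    using g_S_sets by (simp add: emeasure_compl)
  then show ?thesis using g_S1 g_space emeasure_space_1 by simp
qed
lemma g_ae_S: "A \<in> sets m \<Longrightarrow> emeasure m (A \<inter> Sk) = emeasure m A"
proof -
  assume A: "A \<in> sets m"
  have "Rk k - Sk \<in> null_sets m" using g_compl_null g_S_sets g_space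
    using sets.compl_sets[OF g_S_sets] by (auto simp: null_sets_def)
  then have "emeasure m (A - (Rk k - Sk)) = emeasure m A" using A by (rule emeasure_Diff_null_set)
  moreover have "A - (Rk k - Sk) = A \<inter> Sk" using sets.sets_into_space[OF A] g_space by auto
  ultimately show ?thesis by simp
qed
lemma g_ae_S_measure: "A \<in> sets m \<Longrightarrow> measure m (A \<inter> Sk) = measure m A"
  using g_ae_S by (simp add: measure_def)

lemma g_restrict_sets: "sets (restrict_space m Sk) = sets (mborel Sk (dinf k))"
  using mborel_trace[OF metric_Rk[OF g_k], of Sk] g_S_sets g_sets g_S_sub
  by (simp add: sets_restrict_space_cong[OF g_sets])

lemma g_metric_S: "Metric_space Sk (dinf k)" using Metric_space.subspace[OF metric_Rk[OF g_k] g_S_sub] .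
lemma g_metric_X: "Metric_space (enc ` Sk) (dX k)" using metric_enc[OF g_k g_S_sub] .

lemma g_enc_meas: "enc \<in> measurable (restrict_space m Sk) (mborel (enc ` Sk) (dX k))"
  by (rule lip_measurable[OF g_metric_S g_metric_X g_restrict_sets]) auto

lemma g_invenc_meas: "sets N = sets (mborel (enc ` Sk) (dX k)) \<Longrightarrow> inv enc \<in> measurable N (mborel (Rk k) (dinf k))"
  by (rule lip_measurable[OF g_metric_X metric_Rk[OF g_k]]) (use g_S_sub in \<open>auto simp: dX_def\<close>)

lemma g_real_snd: "snd (realize k m) = distr (restrict_space m Sk) (mborel (enc ` Sk) (dX k)) enc"
  by (simp add: realize_def)
lemma g_real_fst: "fst (realize k m) = dX k"
  by (simp add: realize_def)

lemma g_real_space: "space (snd (realize k m)) = enc ` Sk"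
  by (simp add: g_real_snd space_mborel[OF g_metric_X])

lemma g_real_sets: "sets (snd (realize k m)) = sets (mborel (enc ` Sk) (dX k))"
  by (simp add: g_real_snd)

lemma g_real_emeasure: "A \<in> sets (snd (realize k m)) \<Longrightarrow>
    emeasure (snd (realize k m)) A = emeasure m (enc -` A \<inter> Sk)"
proof -
  assume A: "A \<in> sets (snd (realize k m))"
  have "emeasure (snd (realize k m)) A = emeasure (restrict_space m Sk) (enc -` A \<inter> space (restrict_space m Sk))"
    unfolding g_real_snd using A g_enc_meas by (simp add: emeasure_distr g_real_snd)
  also have "\<dots> = emeasure m (enc -` A \<inter> Sk)"
    using g_S_sets g_space g_S_sub by (simp add: emeasure_restrict_space space_restrict_space Int_absorb2)
  finally show ?thesis .
qed

lemma g_real_measure: "A \<in> sets (snd (realize k m)) \<Longrightarrow>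
    measure (snd (realize k m)) A = measure m (enc -` A \<inter> Sk)"
  using g_real_emeasure by (simp add: measure_def)

lemma g_real_prob: "prob_space (snd (realize k m))"
proof -
  have "prob_space (restrict_space m Sk)"
    by (rule prob_space_restrict_space[OF g_S_sets g_S1])
  then show ?thesis unfolding g_real_snd by (rule prob_space.prob_space_distr[OF _ g_enc_meas])
qed

lemma g_real_supp: "mm_supp (realize k m) = enc ` Sk"
proof -
  have "x \<in> mm_supp (realize k m)" if x: "x \<in> enc ` Sk" for x
  proof -
    obtain s where s: "x = enc s" "s \<in> Sk" using x by auto
    have "emeasure (snd (realize k m)) (Metric_space.mball (enc ` Sk) (dX k) x r) > 0" if r: "r > 0" for r
    proof -
      have B: "Metric_space.mball (enc ` Sk) (dX k) x r \<in> sets (snd (realize k m))"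
        unfolding g_real_sets by (rule open_in_mborel[OF g_metric_X Metric_space.openin_mball[OF g_metric_X]])
      have "enc -` Metric_space.mball (enc ` Sk) (dX k) x r \<inter> Sk = Metric_space.mball (Rk k) (dinf k) s r \<inter> Sk"
        using s g_S_sub inj_enc
        by (auto simp: Metric_space.in_mball[OF g_metric_X] Metric_space.in_mball[OF metric_Rk[OF g_k]] inj_eq)
      then have "emeasure (snd (realize k m)) (Metric_space.mball (enc ` Sk) (dX k) x r) =
          emeasure m (Metric_space.mball (Rk k) (dinf k) s r)"
        using g_real_emeasure[OF B] g_ae_S[of "Metric_space.mball (Rk k) (dinf k) s r"]
          open_in_mborel[OF metric_Rk[OF g_k] Metric_space.openin_mball[OF metric_Rk[OF g_k]]] g_sets
        by simp
      also have "\<dots> > 0" using s r g_space unfolding mm_supp_def by auto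
      finally show ?thesis .
    qed
    then show ?thesis using x unfolding mm_supp_def g_real_fst g_real_space by auto
  qed
  then show ?thesis unfolding mm_supp_def g_real_space by auto
qed

lemma g_real_complete: "Metric_space.mcomplete (enc ` Sk) (dX k)"
  unfolding Metric_space.mcomplete_def[OF g_metric_X]
proof (intro allI impI)
  fix \<sigma> assume C: "Metric_space.MCauchy (enc ` Sk) (dX k) \<sigma>"
  define \<tau> where "\<tau> n = inv enc (\<sigma> n)" for n
  have \<tau>Sk: "range \<tau> \<subseteq> Sk" using C unfolding Metric_space.MCauchy_def[OF g_metric_X] \<tau>_def by auto
  have "Metric_space.MCauchy (Rk k) (dinf k) \<tau>"
    using C \<tau>Sk g_S_sub unfolding Metric_space.MCauchy_def[OF g_metric_X] Metric_space.MCauchy_def[OF metric_Rk[OF g_k]]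
    by (auto simp: \<tau>_def dX_def)
  then obtain y where y: "limitin (Metric_space.mtopology (Rk k) (dinf k)) \<tau> y sequentially"
    using mcomplete_Rk[OF g_k] unfolding Metric_space.mcomplete_def[OF metric_Rk[OF g_k]] by blast
  have yS: "y \<in> Sk"
    using g_S_closed \<tau>Sk y unfolding Metric_space.metric_closedin_iff_sequentially_closed[OF metric_Rk[OF g_k]] by blast
  have "\<sigma> n = enc (\<tau> n)" for n
  proof -
    have "\<sigma> n \<in> range enc" using C unfolding Metric_space.MCauchy_def[OF g_metric_X] by blast
    then show ?thesis unfolding \<tau>_def by (simp add: f_inv_into_f)
  qed
  then have "limitin (Metric_space.mtopology (enc ` Sk) (dX k)) \<sigma> (enc y) sequentially"
    unfolding Metric_space.limitin_metric[OF g_metric_X]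
  proof (intro conjI allI impI)
    show "enc y \<in> enc ` Sk" using yS by blast
    fix e :: real assume e: "0 < e"
    then have "\<forall>\<^sub>F x in sequentially. \<tau> x \<in> Rk k \<and> dinf k (\<tau> x) y < e"
      using y unfolding Metric_space.limitin_metric[OF metric_Rk[OF g_k]] by blast
    then show "\<forall>\<^sub>F x in sequentially. \<sigma> x \<in> enc ` Sk \<and> dX k (\<sigma> x) (enc y) < e"
    proof (rule eventually_mono)
      fix x assume "\<tau> x \<in> Rk k \<and> dinf k (\<tau> x) y < e"
      moreover have "\<tau> x \<in> Sk" using \<tau>Sk by blast
      ultimately show "\<sigma> x \<in> enc ` Sk \<and> dX k (\<sigma> x) (enc y) < e" using \<open>\<And>n. \<sigma> n = enc (\<tau> n)\<close> by simp
    qed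
  qed
  then show "\<exists>x. limitin (Metric_space.mtopology (enc ` Sk) (dX k)) \<sigma> x sequentially" by blast
qed

lemma g_real_separable: "separable_space (Metric_space.mtopology (enc ` Sk) (dX k))"
proof -
  obtain C where C: "countable C" "C \<subseteq> Sk" "\<forall>x\<in>Sk. \<forall>r>0. \<exists>c\<in>C. dinf k x c < r"
    using dense_subset[OF metric_Rk[OF g_k] Qk[OF g_k] g_S_sub] by blast
  show ?thesis
  proof (rule sep_from_dense[OF g_metric_X])
    show "countable (enc ` C)" using C by simp
    show "enc ` C \<subseteq> enc ` Sk" using C by auto
    fix x r assume "x \<in> enc ` Sk" "(r::real) > 0"
    then obtain s where "x = enc s" "s \<in> Sk" by auto
    then show "\<exists>c\<in>enc ` C. dX k x c < r" using C \<open>r > 0\<close> by fastforce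
  qed
qed

lemma g_real_mmX: "realize k m \<in> mmX"
  unfolding mmX_def mm_space_def
  using g_metric_X g_real_complete g_real_separable g_real_prob g_real_supp
  by (simp add: realize_def g_real_space[unfolded realize_def] g_real_sets[unfolded realize_def]
      space_mborel[OF g_metric_X])

end

lemma supp_B:
  assumes k: "0 < k" and s: "sets m = sets (mborel (Rk k) (dinf k))"
    and hB: "emeasure m (Rk k - Bkk k) = 0"
  shows "mm_supp (dinf k, restrict_space m (Bkk k)) = mm_supp (dinf k, m)"
    and "mm_supp (dinf k, m) \<subseteq> Bkk k"
proof -
  have sp: "space m = Rk k"
    using s space_mborel[OF metric_Rk[OF k]] by (metis sets_eq_imp_space_eq)
  have B: "Bkk k \<in> sets m" using Bkk_sets[OF k] s by simp
  have RB: "Rk k - Bkk k \<in> sets m" using sets.compl_sets[OF B] sp by simp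
  have spB: "space (restrict_space m (Bkk k)) = Bkk k" using sp Bkk_subset by (auto simp: space_restrict_space)
  interpret R: Metric_space "Rk k" "dinf k" by (rule metric_Rk[OF k])
  interpret RB: Metric_space "Bkk k" "dinf k" by (rule R.subspace[OF Bkk_subset])
  have ball_sets: "R.mball x r \<in> sets m" for x r
    using open_in_mborel[OF metric_Rk[OF k] R.openin_mball] s by simp
  show sub: "mm_supp (dinf k, m) \<subseteq> Bkk k"
  proof
    fix x assume x: "x \<in> mm_supp (dinf k, m)"
    show "x \<in> Bkk k"
    proof (rule ccontr)
      assume "x \<notin> Bkk k"
      then have "x \<in> Rk k - Bkk k" using x sp unfolding mm_supp_def by auto
      then obtain r where r: "r > 0" "R.mball x r \<subseteq> Rk k - Bkk k" using Rk_minus_Bkk_open[OF k] by blast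
      have "emeasure m (R.mball x r) \<le> emeasure m (Rk k - Bkk k)" using r RB by (intro emeasure_mono)
      then have "emeasure m (R.mball x r) = 0" using hB by simp
      moreover have "emeasure m (R.mball x r) > 0" using x r sp unfolding mm_supp_def by auto
      ultimately show False by simp
    qed
  qed
  have eq: "emeasure (restrict_space m (Bkk k)) (RB.mball x r) = emeasure m (R.mball x r)" if x: "x \<in> Bkk k" for x r
  proof -
    have "RB.mball x r = R.mball x r \<inter> Bkk k" using x Bkk_subset[of k] by auto
    then have "emeasure (restrict_space m (Bkk k)) (RB.mball x r) = emeasure m (R.mball x r \<inter> Bkk k)"
      using B sp Bkk_subset by (simp add: emeasure_restrict_space Int_absorb2)
    also have "\<dots> = emeasure m (R.mball x r - (Rk k - Bkk k))"
      by (rule arg_cong[where f="emeasure m"]) auto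
    also have "\<dots> = emeasure m (R.mball x r)"
      using hB RB ball_sets by (intro emeasure_Diff_null_set) (auto simp: null_sets_def)
    finally show ?thesis .
  qed
  show "mm_supp (dinf k, restrict_space m (Bkk k)) = mm_supp (dinf k, m)"
  proof
    show "mm_supp (dinf k, restrict_space m (Bkk k)) \<subseteq> mm_supp (dinf k, m)"
      unfolding mm_supp_def using eq spB sp subsetD[OF Bkk_subset[of k]] by auto
    show "mm_supp (dinf k, m) \<subseteq> mm_supp (dinf k, restrict_space m (Bkk k))"
    proof
      fix x assume x: "x \<in> mm_supp (dinf k, m)"
      then have "x \<in> Bkk k" using sub by blast
      then show "x \<in> mm_supp (dinf k, restrict_space m (Bkk k))"
        using x eq spB sp unfolding mm_supp_def by auto
    qed
  qed
qed

context
  fixes k and m :: "(nat \<Rightarrow> real) measure"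
  assumes g: "good k m" and hB: "emeasure m (Rk k - Bkk k) = 0"
begin

lemma g_iso: "mm_iso (realize k m) (dinf k, restrict_space m (Bkk k))"
  unfolding mm_iso_def
proof (intro exI[of _ "inv enc"] conjI ballI)
  have k: "0 < k" using g_k[OF g] .
  have suppB: "mm_supp (dinf k, restrict_space m (Bkk k)) = (Sk k m)"
    using supp_B(1)[OF k g_sets[OF g] hB] .
  show "bij_betw (inv enc) (mm_supp (realize k m)) (mm_supp (dinf k, restrict_space m (Bkk k)))"
    unfolding suppB g_real_supp[OF g]
  proof (rule bij_betw_imageI)
    show "inj_on (inv enc) (enc ` (Sk k m))" by (rule inj_onI) auto
    show "inv enc ` enc ` (Sk k m) = (Sk k m)" by (simp add: image_image)
  qed
  fix x x' show "fst (dinf k, restrict_space m (Bkk k)) (inv enc x) (inv enc x') = fst (realize k m) x x'"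
    by (simp add: g_real_fst[OF g] dX_def)
next
  fix A assume A: "A \<in> sets (snd (dinf k, restrict_space m (Bkk k)))"
  have k: "0 < k" using g_k[OF g] .
  have B: "Bkk k \<in> sets m" using Bkk_sets[OF k] g_sets[OF g] by simp
  have BB: "Bkk k \<inter> space m \<in> sets m" using B g_space[OF g] Bkk_subset[of k] by (simp add: Int_absorb2)
  have A': "A \<subseteq> Bkk k" "A \<in> sets m"
    using A sets_restrict_space_iff[OF BB] by auto
  have pre: "inv enc -` A \<inter> enc ` (Sk k m) \<in> sets (snd (realize k m))"
  proof -
    have "inv enc \<in> measurable (snd (realize k m)) (mborel (Rk k) (dinf k))"
      by (rule g_invenc_meas[OF g g_real_sets[OF g]])
    then have "inv enc -` A \<inter> space (snd (realize k m)) \<in> sets (snd (realize k m))"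
      using A' g_sets[OF g] by (intro measurable_sets) auto
    then show ?thesis by (simp add: g_real_space[OF g])
  qed
  have supp: "mm_supp (realize k m) = enc ` (Sk k m)" by (rule g_real_supp[OF g])
  have "measure (snd (realize k m)) (inv enc -` A \<inter> enc ` (Sk k m)) = measure m (enc -` (inv enc -` A \<inter> enc ` (Sk k m)) \<inter> (Sk k m))"
    by (rule g_real_measure[OF g pre])
  also have "enc -` (inv enc -` A \<inter> enc ` (Sk k m)) \<inter> (Sk k m) = A \<inter> (Sk k m)" by (auto dest: injD[OF inj_enc])
  also have "measure m (A \<inter> (Sk k m)) = measure m A" using g_ae_S_measure[OF g A'(2)] .
  also have "\<dots> = measure (restrict_space m (Bkk k)) A"
    using A' B g_space[OF g] Bkk_subset by (simp add: measure_restrict_space Int_absorb2)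
  finally show "measure (snd (realize k m)) (inv enc -` A \<inter> mm_supp (realize k m)) =
      measure (snd (dinf k, restrict_space m (Bkk k))) A" by (simp add: supp)
qed

lemma g_Mset: "realize k m \<in> P \<Longrightarrow> m \<in> Mset P k"
  unfolding Mset_def using g_sets[OF g] g_prob[OF g] hB g_iso by auto

end

lemma Mset_good:
  assumes k: "0 < k" and P: "P \<subseteq> mmX" and m: "m \<in> Mset P k"
  shows "good k m" "emeasure m (Rk k - Bkk k) = 0"
    "\<exists>X\<in>P. mm_iso X (dinf k, restrict_space m (Bkk k))"
proof -
  have s: "sets m = sets (mborel (Rk k) (dinf k))" and pr: "prob_space m"
    and hB: "emeasure m (Rk k - Bkk k) = 0"
    and ex: "\<exists>X\<in>P. mm_iso X (dinf k, restrict_space m (Bkk k))"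
    using m unfolding Mset_def by auto
  show "emeasure m (Rk k - Bkk k) = 0" by (fact hB)
  show "\<exists>X\<in>P. mm_iso X (dinf k, restrict_space m (Bkk k))" by (fact ex)
  obtain X where X: "X \<in> P" "mm_iso X (dinf k, restrict_space m (Bkk k))" using ex by blast
  then obtain f where f: "bij_betw f (mm_supp X) (mm_supp (dinf k, restrict_space m (Bkk k)))"
    and fm: "\<forall>A\<in>sets (restrict_space m (Bkk k)). measure (snd X) (f -` A \<inter> mm_supp X) = measure (restrict_space m (Bkk k)) A"
    unfolding mm_iso_def by auto
  have Xmm: "X \<in> mmX" using X P by auto
  then have Xsupp: "mm_supp X = space (snd X)" and Xp: "prob_space (snd X)"
    unfolding mmX_def mm_space_def by (auto split: prod.splits)
  have sp: "space m = Rk k"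
    using s space_mborel[OF metric_Rk[OF k]] by (metis sets_eq_imp_space_eq)
  let ?S = "mm_supp (dinf k, m)"
  have suppB: "mm_supp (dinf k, restrict_space m (Bkk k)) = ?S" using supp_B(1)[OF k s hB] .
  have SB: "?S \<subseteq> Bkk k" using supp_B(2)[OF k s hB] .
  have B: "Bkk k \<in> sets m" using Bkk_sets[OF k] s by simp
  have "closedin (Metric_space.mtopology (Rk k) (dinf k)) ?S"
    using supp_closed[of m "dinf k"] s sp metric_Rk[OF k] by simp
  then have Ssets: "?S \<in> sets m"
    using closed_in_mborel[OF metric_Rk[OF k]] s by simp
  have SinB: "?S \<in> sets (restrict_space m (Bkk k))"
    using Ssets SB B sp by (auto simp: sets_restrict_space_iff)
  have "f -` ?S \<inter> mm_supp X = space (snd X)" using f suppB Xsupp by (auto simp: bij_betw_def)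
  then have "measure m ?S = 1"
    using fm[rule_format, OF SinB] Xp SB B sp Bkk_subset
    by (simp add: measure_restrict_space prob_space.prob_space Int_absorb2)
  moreover interpret prob_space m by (rule pr)
  have "emeasure m ?S = ennreal (measure m ?S)" by (rule emeasure_eq_measure)
  ultimately have "emeasure m ?S = 1" by simp
  then show "good k m" unfolding good_def using k s pr by simp
qed

lemma Mset_nonempty:
  assumes k: "0 < k" and P: "pyramid P"
  shows "Mset P k \<noteq> {}"
proof -
  define z where "z = (\<lambda>_::nat. 0::real)"
  have zR: "z \<in> Rk k" "z \<in> Bkk k" unfolding z_def Rk_def Bkk_def by auto
  define \<delta> where "\<delta> = return (mborel (Rk k) (dinf k)) z"
  have sp: "space (mborel (Rk k) (dinf k)) = Rk k" by (rule space_mborel[OF metric_Rk[OF k]])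
  have ds: "sets \<delta> = sets (mborel (Rk k) (dinf k))" unfolding \<delta>_def by simp
  have dsp: "space \<delta> = Rk k" unfolding \<delta>_def using sp by simp
  have dp: "prob_space \<delta>" unfolding \<delta>_def using zR sp by (intro prob_space_return) auto
  interpret R: Metric_space "Rk k" "dinf k" by (rule metric_Rk[OF k])
  have ball_sets: "R.mball x r \<in> sets \<delta>" for x r
    using open_in_mborel[OF metric_Rk[OF k] R.openin_mball] ds by simp
  have S: "mm_supp (dinf k, \<delta>) = {z}"
  proof
    show "{z} \<subseteq> mm_supp (dinf k, \<delta>)"
      unfolding mm_supp_def using zR dsp ball_sets by (auto simp: \<delta>_def emeasure_return)
    show "mm_supp (dinf k, \<delta>) \<subseteq> {z}"
    proof
      fix x assume x: "x \<in> mm_supp (dinf k, \<delta>)"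
      then have xR: "x \<in> Rk k" using dsp unfolding mm_supp_def by auto
      have "dinf k x z < r" if "r > 0" for r
      proof -
        have "emeasure \<delta> (R.mball x r) > 0" using x that unfolding mm_supp_def by (auto simp: dsp)
        moreover have "emeasure \<delta> (R.mball x r) = indicator (R.mball x r) z"
          using ball_sets[of x r] ds by (simp add: \<delta>_def)
        ultimately have "z \<in> R.mball x r" by (cases "z \<in> R.mball x r") auto
        then show ?thesis by simp
      qed
      then have lt: "\<And>r. 0 < r \<Longrightarrow> dinf k x z < r" .
      have "dinf k x z \<le> 0"
      proof (rule ccontr)
        assume "\<not> dinf k x z \<le> 0"
        then have "dinf k x z < dinf k x z" using lt[of "dinf k x z"] by simp
        then show False by simp
      qed
      then have "dinf k x z = 0" using R.nonneg[of x z] by linarith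
      then show "x \<in> {z}" using xR zR by simp
    qed
  qed
  have "closedin (Metric_space.mtopology (Rk k) (dinf k)) (mm_supp (dinf k, \<delta>))"
    using supp_closed[of \<delta> "dinf k"] ds dsp metric_Rk[OF k] by simp
  then have Ssets: "{z} \<in> sets \<delta>"
    using closed_in_mborel[OF metric_Rk[OF k]] ds S by simp
  have g: "good k \<delta>" unfolding good_def using k ds dp S Ssets by (simp add: \<delta>_def emeasure_return)
  have RB: "Rk k - Bkk k \<in> sets \<delta>" using Bkk_sets[OF k] ds sp by (metis dsp sets.compl_sets)
  have hB: "emeasure \<delta> (Rk k - Bkk k) = 0" using RB zR ds by (simp add: \<delta>_def emeasure_return)
  obtain X where X: "X \<in> P" using P unfolding pyramid_def by auto
  have Xmm: "X \<in> mmX" using X P unfolding pyramid_def by auto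
  then have Xm: "Metric_space (space (snd X)) (fst X)" and Xp: "prob_space (snd X)"
    unfolding mmX_def mm_space_def by (auto split: prod.splits)
  let ?R = "realize k \<delta>"
  have Rsp: "space (snd ?R) = {enc z}" using g_real_space[OF g] S by simp
  have "mm_prec ?R X"
    unfolding mm_prec_def
  proof (intro exI[of _ "\<lambda>_. enc z"] conjI)
    show "lip1 (\<lambda>_. enc z) X ?R" unfolding lip1_def using Rsp Metric_space.nonneg[OF Xm] R.mdist_zero[OF zR(1)]
      by (simp add: g_real_fst[OF g] dX_def)
    show meas: "(\<lambda>_. enc z) \<in> measurable (snd X) (snd ?R)" using Rsp by simp
    show "distr (snd X) (snd ?R) (\<lambda>_. enc z) = snd ?R"
    proof -
      have "distr (snd X) (snd ?R) (\<lambda>_. enc z) = return (snd ?R) (enc z)"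
        using Rsp by (intro prob_space.distr_const[OF Xp]) auto
      also have "\<dots> = snd ?R"
      proof (rule measure_eqI)
        show "sets (return (snd ?R) (enc z)) = sets (snd ?R)" by simp
        fix A assume A: "A \<in> sets (return (snd ?R) (enc z))"
        then have A': "A \<in> sets (snd ?R)" by simp
        have "emeasure (snd ?R) A = emeasure \<delta> (enc -` A \<inter> {z})" using g_real_emeasure[OF g A'] S by simp
        also have "\<dots> = indicator A (enc z)"
          using Ssets g[unfolded good_def] S by (auto split: split_indicator)
        finally show "emeasure (return (snd ?R) (enc z)) A = emeasure (snd ?R) A" using A' by simp
      qed
      finally show ?thesis .
    qed
  qed
  then have "?R \<in> P" using P X g_real_mmX[OF g] unfolding pyramid_def by blast
  then have "\<delta> \<in> Mset P k" by (rule g_Mset[OF g hB])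
  then show ?thesis by blast
qed

lemma idx_iff: "n \<in> idx N \<longleftrightarrow> 1 \<le> n \<and> enat n \<le> N" by (simp add: idx_def)

lemma pad_nonneg: "in_A1 a N \<Longrightarrow> 0 \<le> pad a N n"
  unfolding in_A1_def pad_def by (auto simp: less_imp_le)

lemma pad_has_sum: "in_A1 a N \<Longrightarrow> (pad a N has_sum 1) UNIV"
proof -
  assume "in_A1 a N"
  then have "(a has_sum 1) (idx N)" unfolding in_A1_def by simp
  then show ?thesis by (subst has_sum_cong_neutral[where g=a and T="idx N"]) (auto simp: pad_def)
qed

lemma pad_sums: "in_A1 a N \<Longrightarrow> pad a N sums 1"
  using pad_has_sum has_sum_imp_sums by blast

lemma pad_nn_integral: "in_A1 a N \<Longrightarrow> (\<integral>\<^sup>+ n. ennreal (pad a N n) \<partial>count_space UNIV) = 1"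
proof -
  assume a: "in_A1 a N"
  have "(\<integral>\<^sup>+ n. ennreal (pad a N n) \<partial>count_space UNIV) = (\<Sum>n. ennreal (pad a N n))"
    by (rule nn_integral_count_space_nat)
  also have "\<dots> = ennreal (\<Sum>n. pad a N n)"
    using pad_nonneg[OF a] pad_sums[OF a] by (intro suminf_ennreal2) (auto simp: sums_iff)
  also have "(\<Sum>n. pad a N n) = 1" using pad_sums[OF a] by (simp add: sums_iff)
  finally show ?thesis by simp
qed

definition wpmf :: "(nat \<Rightarrow> real) \<Rightarrow> enat \<Rightarrow> nat pmf" where
  "wpmf a N = embed_pmf (pad a N)"

lemma pmf_wpmf: "in_A1 a N \<Longrightarrow> pmf (wpmf a N) n = pad a N n"
  unfolding wpmf_def by (rule pmf_embed_pmf[OF pad_nonneg pad_nn_integral])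

section \<open>Mixtures\<close>

definition mix :: "nat \<Rightarrow> (nat \<Rightarrow> real) \<Rightarrow> enat \<Rightarrow> (nat \<Rightarrow> (nat \<Rightarrow> real) measure) \<Rightarrow> (nat \<Rightarrow> real) measure" where
  "mix k a N ms = bind (measure_pmf (wpmf a N))
     (\<lambda>n. if n \<in> idx N then ms n else return (mborel (Rk k) (dinf k)) (\<lambda>_. 0))"

lemma mix:
  assumes k: "0 < k" and a: "in_A1 a N"
    and ms: "\<And>n. n \<in> idx N \<Longrightarrow> sets (ms n) = sets (mborel (Rk k) (dinf k)) \<and> prob_space (ms n)"
  shows "sets (mix k a N ms) = sets (mborel (Rk k) (dinf k))"
    and "prob_space (mix k a N ms)"
    and "\<And>A. A \<in> sets (mborel (Rk k) (dinf k)) \<Longrightarrow>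
           ((\<lambda>n. a n * measure (ms n) A) has_sum measure (mix k a N ms) A) (idx N)"
proof -
  let ?K = "mborel (Rk k) (dinf k)"
  define F where "F n = (if n \<in> idx N then ms n else return ?K (\<lambda>_. 0))" for n
  have z: "(\<lambda>_. 0::real) \<in> space ?K" using space_mborel[OF metric_Rk[OF k]] by (simp add: Rk_def)
  have F: "sets (F n) = sets ?K \<and> prob_space (F n)" for n
    using ms z unfolding F_def by (auto intro: prob_space_return)
  have Fm: "F \<in> measurable (measure_pmf (wpmf a N)) (subprob_algebra ?K)"
    using F by (auto simp: space_subprob_algebra prob_space_imp_subprob_space)
  have mixF: "mix k a N ms = bind (measure_pmf (wpmf a N)) F" unfolding mix_def F_def by simp
  show s: "sets (mix k a N ms) = sets ?K" unfolding mixF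
    using F by (intro sets_bind) auto
  show "prob_space (mix k a N ms)" unfolding mixF
    using F by (intro measure_pmf.prob_space_bind[OF _ Fm]) auto
  fix A assume A: "A \<in> sets ?K"
  interpret mp: prob_space "mix k a N ms" unfolding mixF
    using F by (intro measure_pmf.prob_space_bind[OF _ Fm]) auto
  define t where "t n = pad a N n * measure (F n) A" for n
  have t0: "0 \<le> t n" for n unfolding t_def using pad_nonneg[OF a] by simp
  have tle: "t n \<le> pad a N n" for n
  proof -
    interpret prob_space "F n" using F by simp
    have "measure (F n) A \<le> 1" by simp
    then show ?thesis unfolding t_def using pad_nonneg[OF a, of n]
      by (metis mult_left_le)
  qed
  have sp: "summable (pad a N)" using pad_sums[OF a] by (simp add: sums_iff)
  have "\<exists>N0. \<forall>n\<ge>N0. norm (t n) \<le> pad a N n"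
  proof (intro exI[of _ 0] allI impI)
    fix n :: nat show "norm (t n) \<le> pad a N n" using t0[of n] tle[of n] by simp
  qed
  then have summ: "summable t" using sp by (rule summable_comparison_test)
  have "emeasure (mix k a N ms) A = (\<integral>\<^sup>+ n. emeasure (F n) A \<partial>measure_pmf (wpmf a N))"
    unfolding mixF using A F by (intro emeasure_bind[OF _ Fm]) auto
  also have "\<dots> = (\<integral>\<^sup>+ n. ennreal (pmf (wpmf a N) n) * emeasure (F n) A \<partial>count_space UNIV)"
    by (rule nn_integral_measure_pmf)
  also have "\<dots> = (\<integral>\<^sup>+ n. ennreal (t n) \<partial>count_space UNIV)"
  proof (rule nn_integral_cong)
    fix n
    interpret prob_space "F n" using F by simp
    show "ennreal (pmf (wpmf a N) n) * emeasure (F n) A = ennreal (t n)"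
      unfolding t_def pmf_wpmf[OF a] using pad_nonneg[OF a, of n]
      by (simp add: emeasure_eq_measure ennreal_mult)
  qed
  also have "\<dots> = (\<Sum>n. ennreal (t n))" by (rule nn_integral_count_space_nat)
  also have "\<dots> = ennreal (\<Sum>n. t n)" using t0 summ by (rule suminf_ennreal2)
  finally have "emeasure (mix k a N ms) A = ennreal (\<Sum>n. t n)" .
  moreover have "(\<Sum>n. t n) \<ge> 0" using t0 summ by (simp add: suminf_nonneg)
  ultimately have meq: "measure (mix k a N ms) A = (\<Sum>n. t n)"
    by (simp add: mp.emeasure_eq_measure)
  have ht: "(t has_sum (\<Sum>n. t n)) UNIV"
    using summ t0 by (intro sums_nonneg_imp_has_sum) (auto simp: summable_sums)
  then show "((\<lambda>n. a n * measure (ms n) A) has_sum measure (mix k a N ms) A) (idx N)"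
  proof -
    have eq: "((\<lambda>n. a n * measure (ms n) A) has_sum measure (mix k a N ms) A) (idx N) \<longleftrightarrow>
        (t has_sum measure (mix k a N ms) A) UNIV"
      by (rule has_sum_cong_neutral) (auto simp: t_def pad_def F_def)
    show ?thesis using eq ht meq by simp
  qed
qed

lemma mmX_facts:
  assumes "X \<in> mmX"
  shows "Metric_space (space (snd X)) (fst X)" "prob_space (snd X)"
    "sets (snd X) = sets (mborel (space (snd X)) (fst X))" "mm_supp X = space (snd X)"
  using assms unfolding mmX_def mm_space_def by (auto split: prod.splits)

lemma dirsum_mmX: "dirsum P a N \<subseteq> mmX" unfolding dirsum_def by auto

lemma pyr_mmX: "pyramid P \<Longrightarrow> P \<subseteq> mmX" unfolding pyramid_def by auto

lemma pyr_down: "pyramid P \<Longrightarrow> X \<in> P \<Longrightarrow> Y \<in> mmX \<Longrightarrow> mm_prec Y X \<Longrightarrow> Y \<in> P"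
  unfolding pyramid_def by blast

section \<open>Decomposition\<close>

lemma decomp:
  assumes k: "0 < k" and pyr: "\<forall>n\<in>idx N. pyramid (P n)"
    and mu: "\<mu> \<in> Mset (dirsum P a N) k"
  shows "\<exists>\<mu>s. (\<forall>n\<in>idx N. \<mu>s n \<in> Mset (P n) k) \<and>
     (\<forall>A\<in>sets (mborel (Rk k) (dinf k)). ((\<lambda>n. a n * measure (\<mu>s n) A) has_sum measure \<mu> A) (idx N))"
proof -
  let ?K = "mborel (Rk k) (dinf k)"
  have g: "good k \<mu>" and hB: "emeasure \<mu> (Rk k - Bkk k) = 0"
    and ex: "\<exists>X\<in>dirsum P a N. mm_iso X (dinf k, restrict_space \<mu> (Bkk k))"
    using Mset_good[OF k dirsum_mmX mu] by auto
  obtain X where X: "X \<in> dirsum P a N" and iso: "mm_iso X (dinf k, restrict_space \<mu> (Bkk k))" using ex by blast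
  have Xmm: "X \<in> mmX" using X dirsum_mmX by blast
  note XF = mmX_facts[OF Xmm]
  let ?SX = "space (snd X)" and ?dX = "fst X" and ?S = "Sk k \<mu>"
  obtain Xs fs where Xs: "\<forall>n\<in>idx N. Xs n \<in> P n \<and> lip1 (fs n) (Xs n) X \<and> fs n \<in> measurable (snd (Xs n)) (snd X)"
    and Xsum: "\<forall>A\<in>sets (snd X). ((\<lambda>n. a n * measure (snd (Xs n)) (fs n -` A \<inter> space (snd (Xs n)))) has_sum
            measure (snd X) A) (idx N)"
    using X unfolding dirsum_def by blast
  have suppB: "mm_supp (dinf k, restrict_space \<mu> (Bkk k)) = ?S" using supp_B(1)[OF k g_sets[OF g] hB] .
  have SB: "?S \<subseteq> Bkk k" using supp_B(2)[OF k g_sets[OF g] hB] .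
  obtain h where hb: "bij_betw h ?SX ?S"
    and hi: "\<And>x x'. x \<in> ?SX \<Longrightarrow> x' \<in> ?SX \<Longrightarrow> dinf k (h x) (h x') = ?dX x x'"
    and hm: "\<And>A. A \<in> sets (restrict_space \<mu> (Bkk k)) \<Longrightarrow> measure (snd X) (h -` A \<inter> ?SX) = measure (restrict_space \<mu> (Bkk k)) A"
    using iso unfolding mm_iso_def suppB XF(4) by auto
  have hS: "h x \<in> ?S" if "x \<in> ?SX" for x using hb that by (auto simp: bij_betw_def)
  have hmeas: "h \<in> measurable (snd X) ?K"
    by (rule lip_measurable[OF XF(1) metric_Rk[OF k] XF(3)]) (use hS g_S_sub[OF g] hi in auto)
  have B: "Bkk k \<in> sets \<mu>" using Bkk_sets[OF k] g_sets[OF g] by simp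
  have BB: "Bkk k \<inter> space \<mu> \<in> sets \<mu>" using B g_space[OF g] Bkk_subset[of k] by (simp add: Int_absorb2)
  define \<mu>s where "\<mu>s n = distr (snd (Xs n)) ?K (h \<circ> fs n)" for n
  have main: "\<mu>s n \<in> Mset (P n) k \<and>
     (\<forall>A\<in>sets ?K. measure (\<mu>s n) A = measure (snd (Xs n)) (fs n -` (h -` A \<inter> ?SX) \<inter> space (snd (Xs n))))"
    if n: "n \<in> idx N" for n
  proof -
    let ?Y = "Xs n"
    have Ymm: "?Y \<in> mmX" using Xs n pyr pyr_mmX by blast
    note YF = mmX_facts[OF Ymm]
    have fl: "lip1 (fs n) ?Y X" and fm: "fs n \<in> measurable (snd ?Y) (snd X)" using Xs n by auto
    have fS: "fs n y \<in> ?SX" if "y \<in> space (snd ?Y)" for y using fl that unfolding lip1_def by auto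
    have fL: "?dX (fs n y) (fs n y') \<le> fst ?Y y y'" if "y \<in> space (snd ?Y)" "y' \<in> space (snd ?Y)" for y y'
      using fl that unfolding lip1_def by auto
    have hfm: "h \<circ> fs n \<in> measurable (snd ?Y) ?K" using measurable_comp[OF fm hmeas] .
    have sets_mu: "sets (\<mu>s n) = sets ?K" unfolding \<mu>s_def by simp
    have prob_mu: "prob_space (\<mu>s n)" unfolding \<mu>s_def by (rule prob_space.prob_space_distr[OF YF(2) hfm])
    have em: "emeasure (\<mu>s n) A = emeasure (snd ?Y) ((h \<circ> fs n) -` A \<inter> space (snd ?Y))" if "A \<in> sets ?K" for A
      unfolding \<mu>s_def using that hfm by (simp add: emeasure_distr)
    have ms: "measure (\<mu>s n) A = measure (snd ?Y) ((h \<circ> fs n) -` A \<inter> space (snd ?Y))" if "A \<in> sets ?K" for A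
      unfolding \<mu>s_def using that hfm by (simp add: measure_distr)
    have pre: "(h \<circ> fs n) -` A \<inter> space (snd ?Y) = fs n -` (h -` A \<inter> ?SX) \<inter> space (snd ?Y)" for A
      using fS by auto
    interpret R: Metric_space "Rk k" "dinf k" by (rule metric_Rk[OF k])
    interpret Y: Metric_space "space (snd ?Y)" "fst ?Y" by (rule YF(1))
    let ?Sn = "Sk k (\<mu>s n)"
    have spmu: "space (\<mu>s n) = Rk k" unfolding \<mu>s_def by (simp add: space_mborel[OF metric_Rk[OF k]])
    have F1: "h (fs n y) \<in> ?Sn" if y: "y \<in> space (snd ?Y)" for y
    proof -
      have hy: "h (fs n y) \<in> Rk k" using hS fS y g_S_sub[OF g] by blast
      have "emeasure (\<mu>s n) (R.mball (h (fs n y)) r) > 0" if r: "r > 0" for r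
      proof -
        have bs: "R.mball (h (fs n y)) r \<in> sets ?K" by (rule open_in_mborel[OF metric_Rk[OF k] R.openin_mball])
        have sub: "Y.mball y r \<subseteq> (h \<circ> fs n) -` R.mball (h (fs n y)) r \<inter> space (snd ?Y)"
        proof
          fix y' assume "y' \<in> Y.mball y r"
          then have y': "y' \<in> space (snd ?Y)" "fst ?Y y y' < r" by auto
          have "dinf k (h (fs n y)) (h (fs n y')) = ?dX (fs n y) (fs n y')" using hi fS y y' by simp
          also have "\<dots> \<le> fst ?Y y y'" using fL y y' by simp
          finally show "y' \<in> (h \<circ> fs n) -` R.mball (h (fs n y)) r \<inter> space (snd ?Y)"
            using y' hy hS fS g_S_sub[OF g] by auto
        qed
        have "0 < emeasure (snd ?Y) (Y.mball y r)" using y r YF(4) unfolding mm_supp_def by auto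
        also have "\<dots> \<le> emeasure (snd ?Y) ((h \<circ> fs n) -` R.mball (h (fs n y)) r \<inter> space (snd ?Y))"
          using sub measurable_sets[OF hfm bs] by (rule emeasure_mono)
        also have "\<dots> = emeasure (\<mu>s n) (R.mball (h (fs n y)) r)" using em[OF bs] by simp
        finally show ?thesis .
      qed
      then show ?thesis using hy spmu unfolding mm_supp_def by auto
    qed
    have Sn_sets: "?Sn \<in> sets ?K"
    proof -
      have "closedin (Metric_space.mtopology (Rk k) (dinf k)) ?Sn"
        using supp_closed[of "\<mu>s n" "dinf k"] spmu sets_mu metric_Rk[OF k] by simp
      then show ?thesis by (rule closed_in_mborel[OF metric_Rk[OF k]])
    qed
    have "emeasure (\<mu>s n) ?Sn = emeasure (snd ?Y) (space (snd ?Y))"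
    proof -
      have "(h \<circ> fs n) -` ?Sn \<inter> space (snd ?Y) = space (snd ?Y)" using F1 by auto
      then show ?thesis using em[OF Sn_sets] by simp
    qed
    then have gn: "good k (\<mu>s n)" unfolding good_def using k sets_mu prob_mu
      by (simp add: prob_space.emeasure_space_1[OF YF(2)])
    have RBs: "Rk k - Bkk k \<in> sets ?K" using Bkk_sets[OF k] space_mborel[OF metric_Rk[OF k]] by (metis sets.compl_sets)
    have hB': "h (fs n y) \<in> Bkk k" if "y \<in> space (snd ?Y)" for y using hS[OF fS[OF that]] SB by blast
    have "(h \<circ> fs n) -` (Rk k - Bkk k) \<inter> space (snd ?Y) = {}" using hB' by auto
    then have hBn: "emeasure (\<mu>s n) (Rk k - Bkk k) = 0" using em[OF RBs] by simp
    let ?R = "realize k (\<mu>s n)"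
    define \<phi> where "\<phi> = enc \<circ> h \<circ> fs n"
    have Rsp: "space (snd ?R) = enc ` ?Sn" by (rule g_real_space[OF gn])
    have "mm_prec ?R ?Y"
      unfolding mm_prec_def
    proof (intro exI[of _ \<phi>] conjI)
      have phS: "\<phi> y \<in> enc ` ?Sn" if "y \<in> space (snd ?Y)" for y using F1[OF that] unfolding \<phi>_def by simp
      have phL: "dX k (\<phi> y) (\<phi> y') \<le> fst ?Y y y'" if "y \<in> space (snd ?Y)" "y' \<in> space (snd ?Y)" for y y'
        using hi fS fL that unfolding \<phi>_def by simp
      show "lip1 \<phi> ?Y ?R" unfolding lip1_def g_real_fst[OF gn] Rsp using phS phL by auto
      have pm: "\<phi> \<in> measurable (snd ?Y) (mborel (enc ` ?Sn) (dX k))"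
        by (rule lip_measurable[OF YF(1) g_metric_X[OF gn] YF(3)]) (use phS phL in auto)
      then show pm': "\<phi> \<in> measurable (snd ?Y) (snd ?R)"
        by (subst measurable_cong_sets[OF refl g_real_sets[OF gn]]) (rule pm)
      show "distr (snd ?Y) (snd ?R) \<phi> = snd ?R"
      proof (rule measure_eqI)
        show "sets (distr (snd ?Y) (snd ?R) \<phi>) = sets (snd ?R)" by simp
        fix A assume "A \<in> sets (distr (snd ?Y) (snd ?R) \<phi>)"
        then have A: "A \<in> sets (snd ?R)" by simp
        have A1: "enc -` A \<inter> ?Sn \<in> sets ?K"
        proof -
          have "enc -` A \<inter> space (restrict_space (\<mu>s n) ?Sn) \<in> sets (restrict_space (\<mu>s n) ?Sn)"
            using measurable_sets[OF g_enc_meas[OF gn]] A g_real_sets[OF gn] by simp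
          moreover have "?Sn \<in> sets (\<mu>s n)" using Sn_sets sets_mu by simp
          ultimately show ?thesis using sets_mu spmu
            by (simp add: sets_restrict_space_iff space_restrict_space Int_absorb2 g_S_sub[OF gn])
        qed
        have "emeasure (snd ?R) A = emeasure (\<mu>s n) (enc -` A \<inter> ?Sn)" by (rule g_real_emeasure[OF gn A])
        also have "\<dots> = emeasure (snd ?Y) ((h \<circ> fs n) -` (enc -` A \<inter> ?Sn) \<inter> space (snd ?Y))" by (rule em[OF A1])
        also have "(h \<circ> fs n) -` (enc -` A \<inter> ?Sn) \<inter> space (snd ?Y) = \<phi> -` A \<inter> space (snd ?Y)"
          using F1 unfolding \<phi>_def by auto
        finally show "emeasure (distr (snd ?Y) (snd ?R) \<phi>) A = emeasure (snd ?R) A"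
          using A pm' by (simp add: emeasure_distr)
      qed
    qed
    then have "?R \<in> P n" using pyr_down[of "P n" ?Y ?R] pyr n Xs g_real_mmX[OF gn] by blast
    then have "\<mu>s n \<in> Mset (P n) k" by (rule g_Mset[OF gn hBn])
    then show ?thesis using ms pre by simp
  qed
  show ?thesis
  proof (intro exI[of _ \<mu>s] conjI ballI)
    fix n assume "n \<in> idx N" then show "\<mu>s n \<in> Mset (P n) k" using main by blast
  next
    fix A assume A: "A \<in> sets ?K"
    have A\<mu>: "A \<in> sets \<mu>" using A g_sets[OF g] by simp
    have AS: "A \<inter> ?S \<in> sets (restrict_space \<mu> (Bkk k))"
      using A\<mu> g_S_sets[OF g] SB by (auto simp: sets_restrict_space_iff[OF BB])
    have "measure \<mu> A = measure \<mu> (A \<inter> ?S)" using g_ae_S_measure[OF g A\<mu>] by simp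
    also have "\<dots> = measure (restrict_space \<mu> (Bkk k)) (A \<inter> ?S)"
    proof -
      have sub: "A \<inter> ?S \<subseteq> Bkk k" using SB by blast
      show ?thesis using measure_restrict_space[OF BB sub] by simp
    qed
    also have "\<dots> = measure (snd X) (h -` (A \<inter> ?S) \<inter> ?SX)" using hm[OF AS] by simp
    also have "h -` (A \<inter> ?S) \<inter> ?SX = h -` A \<inter> ?SX" using hS by auto
    finally have eq: "measure \<mu> A = measure (snd X) (h -` A \<inter> ?SX)" .
    have "h -` A \<inter> ?SX \<in> sets (snd X)" using measurable_sets[OF hmeas A] .
    then have "((\<lambda>n. a n * measure (snd (Xs n)) (fs n -` (h -` A \<inter> ?SX) \<inter> space (snd (Xs n)))) has_sum
            measure (snd X) (h -` A \<inter> ?SX)) (idx N)" using Xsum by blast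
    then show "((\<lambda>n. a n * measure (\<mu>s n) A) has_sum measure \<mu> A) (idx N)"
      unfolding eq using main A by (subst has_sum_cong[where g="\<lambda>n. a n * measure (snd (Xs n)) (fs n -` (h -` A \<inter> ?SX) \<inter> space (snd (Xs n)))"]) auto
  qed
qed

lemma has_sum_ge_term:
  fixes f :: "nat \<Rightarrow> real"
  assumes "(f has_sum s) I" "n \<in> I" "\<And>i. i \<in> I \<Longrightarrow> 0 \<le> f i"
  shows "f n \<le> s"
proof -
  have "(f has_sum f n) {n}" using has_sum_finite[of "{n}" f] by simp
  then show ?thesis by (rule has_sum_mono_neutral[OF _ assms(1)]) (use assms in auto)
qed

lemma build:
  assumes k: "0 < k" and pyr: "\<forall>n\<in>idx N. pyramid (P n)" and a: "in_A1 a N"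
    and ms: "\<forall>n\<in>idx N. ms n \<in> Mset (P n) k"
  shows "mix k a N ms \<in> Mset (dirsum P a N) k"
proof -
  let ?K = "mborel (Rk k) (dinf k)"
  let ?l = "mix k a N ms"
  have gn: "good k (ms n)" and hBn: "emeasure (ms n) (Rk k - Bkk k) = 0"
    and exn: "\<exists>Z\<in>P n. mm_iso Z (dinf k, restrict_space (ms n) (Bkk k))" if "n \<in> idx N" for n
    using Mset_good[OF k pyr_mmX ms[rule_format, OF that]] pyr that by auto
  have msp: "sets (ms n) = sets ?K \<and> prob_space (ms n)" if "n \<in> idx N" for n
    using gn[OF that] unfolding good_def by auto
  have mx1: "sets ?l = sets ?K" by (rule mix(1)[OF k a msp])
  have mx2: "prob_space ?l" by (rule mix(2)[OF k a msp])
  have mx3: "((\<lambda>n. a n * measure (ms n) A) has_sum measure ?l A) (idx N)" if "A \<in> sets ?K" for A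
    by (rule mix(3)[OF k a msp that])
  have a0: "0 \<le> a n" if "n \<in> idx N" for n using a that unfolding in_A1_def by (auto simp: less_imp_le)
  have apos: "0 < a n" if "n \<in> idx N" for n using a that unfolding in_A1_def by auto
  have ahs: "(a has_sum 1) (idx N)" using a unfolding in_A1_def by simp
  interpret L: prob_space ?l by (rule mx2)
  have lsp: "space ?l = Rk k" using sets_eq_imp_space_eq[OF mx1] space_mborel[OF metric_Rk[OF k]] by simp
  interpret R: Metric_space "Rk k" "dinf k" by (rule metric_Rk[OF k])
  let ?S = "Sk k ?l"
  have S_sets: "?S \<in> sets ?K"
  proof -
    have "closedin (Metric_space.mtopology (Rk k) (dinf k)) ?S"
      using supp_closed[of ?l "dinf k"] lsp mx1 metric_Rk[OF k] by simp
    then show ?thesis by (rule closed_in_mborel[OF metric_Rk[OF k]])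
  qed
  have Ssub: "Sk k (ms n) \<subseteq> ?S" if n: "n \<in> idx N" for n
  proof
    fix y assume y: "y \<in> Sk k (ms n)"
    have ysp: "y \<in> Rk k" using y g_space[OF gn[OF n]] unfolding mm_supp_def by auto
    have "emeasure ?l (R.mball y r) > 0" if r: "r > 0" for r
    proof -
      have bs: "R.mball y r \<in> sets ?K" by (rule open_in_mborel[OF metric_Rk[OF k] R.openin_mball])
      interpret Mn: prob_space "ms n" using msp[OF n] by simp
      have "emeasure (ms n) (R.mball y r) > 0" using y r g_space[OF gn[OF n]] unfolding mm_supp_def by auto
      then have p: "measure (ms n) (R.mball y r) > 0" by (simp add: Mn.emeasure_eq_measure)
      have "a n * measure (ms n) (R.mball y r) \<le> measure ?l (R.mball y r)"
        by (rule has_sum_ge_term[OF mx3[OF bs] n]) (use a0 in \<open>auto intro!: mult_nonneg_nonneg\<close>)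
      moreover have "a n * measure (ms n) (R.mball y r) > 0" using p apos[OF n] by simp
      ultimately have "measure ?l (R.mball y r) > 0" by linarith
      then show ?thesis by (simp add: L.emeasure_eq_measure)
    qed
    then show "y \<in> ?S" using ysp lsp unfolding mm_supp_def by auto
  qed
  have mS1: "measure (ms n) ?S = 1" if n: "n \<in> idx N" for n
  proof -
    interpret Mn: prob_space "ms n" using msp[OF n] by simp
    have "measure (ms n) (Sk k (ms n)) \<le> measure (ms n) ?S"
      using Ssub[OF n] S_sets msp[OF n] by (intro Mn.finite_measure_mono) auto
    moreover have "measure (ms n) (Sk k (ms n)) = 1"
      using g_S1[OF gn[OF n]] by (simp add: Mn.emeasure_eq_measure)
    ultimately show ?thesis using Mn.prob_le_1[of ?S] by simp
  qed
  have "((\<lambda>n. a n * measure (ms n) ?S) has_sum measure ?l ?S) (idx N)" by (rule mx3[OF S_sets])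
  moreover have "((\<lambda>n. a n * measure (ms n) ?S) has_sum 1) (idx N)"
    using ahs by (subst has_sum_cong[where g=a]) (auto simp: mS1)
  ultimately have "measure ?l ?S = 1" using has_sum_unique by blast
  then have lS: "emeasure ?l ?S = 1" by (simp add: L.emeasure_eq_measure)
  have gl: "good k ?l" unfolding good_def using k mx1 mx2 lS by simp
  have RBs: "Rk k - Bkk k \<in> sets ?K" using sets.compl_sets[OF Bkk_sets[OF k]] space_mborel[OF metric_Rk[OF k]] by simp
  have "((\<lambda>n. a n * measure (ms n) (Rk k - Bkk k)) has_sum measure ?l (Rk k - Bkk k)) (idx N)" by (rule mx3[OF RBs])
  moreover have "((\<lambda>n. a n * measure (ms n) (Rk k - Bkk k)) has_sum 0) (idx N)"
  proof -
    have "measure (ms n) (Rk k - Bkk k) = 0" if "n \<in> idx N" for n using hBn[OF that] by (simp add: measure_def)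
    then show ?thesis by (subst has_sum_cong[where g="\<lambda>_. 0"]) auto
  qed
  ultimately have "measure ?l (Rk k - Bkk k) = 0" using has_sum_unique by blast
  then have hBl: "emeasure ?l (Rk k - Bkk k) = 0" by (simp add: L.emeasure_eq_measure)
  have SB: "?S \<subseteq> Bkk k" using supp_B(2)[OF k mx1 hBl] .
  have "\<forall>n\<in>idx N. \<exists>Zg. fst Zg \<in> P n \<and> bij_betw (snd Zg) (mm_supp (fst Zg)) (mm_supp (dinf k, restrict_space (ms n) (Bkk k))) \<and>
      (\<forall>x\<in>mm_supp (fst Zg). \<forall>x'\<in>mm_supp (fst Zg). dinf k (snd Zg x) (snd Zg x') = fst (fst Zg) x x') \<and>
      (\<forall>A\<in>sets (restrict_space (ms n) (Bkk k)). measure (snd (fst Zg)) (snd Zg -` A \<inter> mm_supp (fst Zg)) = measure (restrict_space (ms n) (Bkk k)) A)"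
  proof
    fix n assume n: "n \<in> idx N"
    obtain Z where "Z \<in> P n" "mm_iso Z (dinf k, restrict_space (ms n) (Bkk k))" using exn[OF n] by blast
    then show "\<exists>Zg. fst Zg \<in> P n \<and> bij_betw (snd Zg) (mm_supp (fst Zg)) (mm_supp (dinf k, restrict_space (ms n) (Bkk k))) \<and>
      (\<forall>x\<in>mm_supp (fst Zg). \<forall>x'\<in>mm_supp (fst Zg). dinf k (snd Zg x) (snd Zg x') = fst (fst Zg) x x') \<and>
      (\<forall>A\<in>sets (restrict_space (ms n) (Bkk k)). measure (snd (fst Zg)) (snd Zg -` A \<inter> mm_supp (fst Zg)) = measure (restrict_space (ms n) (Bkk k)) A)"
      unfolding mm_iso_def by (metis fst_conv snd_conv)
  qed
  then obtain Zg where Zg: "\<forall>n\<in>idx N. fst (Zg n) \<in> P n \<and> bij_betw (snd (Zg n)) (mm_supp (fst (Zg n))) (mm_supp (dinf k, restrict_space (ms n) (Bkk k))) \<and>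
      (\<forall>x\<in>mm_supp (fst (Zg n)). \<forall>x'\<in>mm_supp (fst (Zg n)). dinf k (snd (Zg n) x) (snd (Zg n) x') = fst (fst (Zg n)) x x') \<and>
      (\<forall>A\<in>sets (restrict_space (ms n) (Bkk k)). measure (snd (fst (Zg n))) (snd (Zg n) -` A \<inter> mm_supp (fst (Zg n))) = measure (restrict_space (ms n) (Bkk k)) A)"
    by metis
  define Zs where "Zs n = fst (Zg n)" for n
  define gs where "gs n = snd (Zg n)" for n
  define fs where "fs n = enc \<circ> gs n" for n
  let ?R = "realize k ?l"
  have Rsp: "space (snd ?R) = enc ` ?S" by (rule g_real_space[OF gl])
  have "?R \<in> dirsum P a N"
    unfolding dirsum_def
  proof (intro CollectI conjI exI[of _ Zs] exI[of _ fs] ballI)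
    show "?R \<in> mmX" by (rule g_real_mmX[OF gl])
    fix n assume n: "n \<in> idx N"
    have ZP: "Zs n \<in> P n" using Zg n unfolding Zs_def by blast
    have Zmm: "Zs n \<in> mmX" using ZP pyr n pyr_mmX by blast
    note ZF = mmX_facts[OF Zmm]
    have suppBn: "mm_supp (dinf k, restrict_space (ms n) (Bkk k)) = Sk k (ms n)"
      using supp_B(1)[OF k g_sets[OF gn[OF n]] hBn[OF n]] .
    have gb: "bij_betw (gs n) (space (snd (Zs n))) (Sk k (ms n))"
      using Zg n ZF(4) suppBn unfolding Zs_def gs_def by auto
    have gi: "dinf k (gs n x) (gs n x') = fst (Zs n) x x'" if "x \<in> space (snd (Zs n))" "x' \<in> space (snd (Zs n))" for x x'
      using Zg n ZF(4) that unfolding Zs_def gs_def by auto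
    have gS: "gs n x \<in> Sk k (ms n)" if "x \<in> space (snd (Zs n))" for x using gb that by (auto simp: bij_betw_def)
    have fS: "fs n x \<in> enc ` ?S" if "x \<in> space (snd (Zs n))" for x using gS[OF that] Ssub[OF n] unfolding fs_def by auto
    have fL: "dX k (fs n x) (fs n x') \<le> fst (Zs n) x x'" if "x \<in> space (snd (Zs n))" "x' \<in> space (snd (Zs n))" for x x'
      using gi[OF that] unfolding fs_def by simp
    show "Zs n \<in> P n" by (fact ZP)
    show "lip1 (fs n) (Zs n) ?R" unfolding lip1_def g_real_fst[OF gl] Rsp using fS fL by auto
    have "fs n \<in> measurable (snd (Zs n)) (mborel (enc ` ?S) (dX k))"
      by (rule lip_measurable[OF ZF(1) g_metric_X[OF gl] ZF(3)]) (use fS fL in auto)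
    then show "fs n \<in> measurable (snd (Zs n)) (snd ?R)"
      by (subst measurable_cong_sets[OF refl g_real_sets[OF gl]])
  next
    fix A assume A: "A \<in> sets (snd ?R)"
    define A' where "A' = enc -` A \<inter> ?S"
    have A'K: "A' \<in> sets ?K"
    proof -
      have "enc -` A \<inter> space (restrict_space ?l ?S) \<in> sets (restrict_space ?l ?S)"
        using measurable_sets[OF g_enc_meas[OF gl]] A g_real_sets[OF gl] by simp
      moreover have "?S \<in> sets ?l" using S_sets mx1 by simp
      ultimately show ?thesis unfolding A'_def using mx1 lsp
        by (simp add: sets_restrict_space_iff space_restrict_space Int_absorb2 g_S_sub[OF gl])
    qed
    have mR: "measure (snd ?R) A = measure ?l A'" unfolding A'_def by (rule g_real_measure[OF gl A])
    have trm: "measure (ms n) A' = measure (snd (Zs n)) (fs n -` A \<inter> space (snd (Zs n)))" if n: "n \<in> idx N" for n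
    proof -
      have Zmm: "Zs n \<in> mmX" using Zg n pyr pyr_mmX unfolding Zs_def by blast
      note ZF = mmX_facts[OF Zmm]
      have suppBn: "mm_supp (dinf k, restrict_space (ms n) (Bkk k)) = Sk k (ms n)"
        using supp_B(1)[OF k g_sets[OF gn[OF n]] hBn[OF n]] .
      have gb: "bij_betw (gs n) (space (snd (Zs n))) (Sk k (ms n))"
        using Zg n ZF(4) suppBn unfolding Zs_def gs_def by auto
      have gS: "gs n x \<in> Sk k (ms n)" if "x \<in> space (snd (Zs n))" for x using gb that by (auto simp: bij_betw_def)
      have B: "Bkk k \<inter> space (ms n) \<in> sets (ms n)"
        using Bkk_sets[OF k] g_sets[OF gn[OF n]] g_space[OF gn[OF n]] Bkk_subset[of k] by (simp add: Int_absorb2)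
      have A'B: "A' \<subseteq> Bkk k" unfolding A'_def using SB by blast
      have A'r: "A' \<in> sets (restrict_space (ms n) (Bkk k))"
        using A'K A'B g_sets[OF gn[OF n]] by (simp add: sets_restrict_space_iff[OF B])
      have "measure (snd (Zs n)) (gs n -` A' \<inter> space (snd (Zs n))) = measure (restrict_space (ms n) (Bkk k)) A'"
        using Zg n A'r ZF(4) unfolding Zs_def gs_def by auto
      also have "\<dots> = measure (ms n) A'" using measure_restrict_space[OF B A'B] .
      also have "gs n -` A' \<inter> space (snd (Zs n)) = fs n -` A \<inter> space (snd (Zs n))"
        unfolding A'_def fs_def using gS Ssub[OF n] by auto
      finally show ?thesis by simp
    qed
    show "((\<lambda>n. a n * measure (snd (Zs n)) (fs n -` A \<inter> space (snd (Zs n)))) has_sum measure (snd ?R) A) (idx N)"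
      unfolding mR using mx3[OF A'K] by (subst has_sum_cong[where g="\<lambda>n. a n * measure (ms n) A'"]) (auto simp: trm)
  qed
  then show ?thesis
    using g_Mset[OF gl hBl] by blast
qed

section \<open>Prokhorov-type distance facts\<close>

definition Pset :: "nat \<Rightarrow> (nat \<Rightarrow> real) measure \<Rightarrow> (nat \<Rightarrow> real) measure \<Rightarrow> real set" where
  "Pset k \<mu> \<nu> = {e. 0 < e \<and> (\<forall>A\<in>sets \<nu>. measure \<mu> (nbhd k e A) \<ge> measure \<nu> A - e)}"

lemma dP_Pset: "dP k \<mu> \<nu> = Inf (Pset k \<mu> \<nu>)" unfolding dP_def Pset_def by simp

lemma Pset_1: assumes p: "prob_space \<nu>" shows "1 \<in> Pset k \<mu> \<nu>"
  unfolding Pset_def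
proof (intro CollectI conjI ballI)
  show "(0::real) < 1" by simp
  fix A assume "A \<in> sets \<nu>"
  have "measure \<nu> A \<le> 1" by (rule prob_space.prob_le_1[OF p])
  moreover have "0 \<le> measure \<mu> (nbhd k 1 A)" by simp
  ultimately show "measure \<nu> A - 1 \<le> measure \<mu> (nbhd k 1 A)" by linarith
qed

lemma Pset_bdd: "bdd_below (Pset k \<mu> \<nu>)"
  unfolding Pset_def by (auto intro!: bdd_belowI[of _ 0])

lemma dP_nonneg: assumes p: "prob_space \<nu>" shows "0 \<le> dP k \<mu> \<nu>"
  unfolding dP_Pset
proof (rule cInf_greatest)
  show "Pset k \<mu> \<nu> \<noteq> {}" using Pset_1[OF p] by blast
  fix x assume "x \<in> Pset k \<mu> \<nu>" then show "0 \<le> x" unfolding Pset_def by auto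
qed

lemma dP_le: "e \<in> Pset k \<mu> \<nu> \<Longrightarrow> dP k \<mu> \<nu> \<le> e"
  unfolding dP_Pset by (rule cInf_lower[OF _ Pset_bdd])

lemma dP_le1: "prob_space \<nu> \<Longrightarrow> dP k \<mu> \<nu> \<le> 1"
  using dP_le Pset_1 by blast

lemma dP_lessD: assumes p: "prob_space \<nu>" and lt: "dP k \<mu> \<nu> < x" shows "\<exists>e\<in>Pset k \<mu> \<nu>. e < x"
proof -
  have ne: "Pset k \<mu> \<nu> \<noteq> {}" using Pset_1[OF p] by blast
  show ?thesis using cInf_lessD[OF ne, of x] lt unfolding dP_Pset by blast
qed

lemma Pset_up:
  assumes k: "0 < k" and s: "sets \<mu> = sets (mborel (Rk k) (dinf k))" and p: "prob_space \<mu>"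
    and e: "e \<in> Pset k \<mu> \<nu>" and le: "e \<le> e'"
  shows "e' \<in> Pset k \<mu> \<nu>"
  unfolding Pset_def
proof (intro CollectI conjI ballI)
  show "0 < e'" using e le unfolding Pset_def by auto
  fix A assume A: "A \<in> sets \<nu>"
  interpret prob_space \<mu> by (rule p)
  have "measure \<nu> A - e' \<le> measure \<nu> A - e" using le by simp
  also have "\<dots> \<le> measure \<mu> (nbhd k e A)" using e A unfolding Pset_def by auto
  also have "\<dots> \<le> measure \<mu> (nbhd k e' A)"
    using nbhd_mono[OF le] nbhd_sets[OF k] s by (intro finite_measure_mono) auto
  finally show "measure \<nu> A - e' \<le> measure \<mu> (nbhd k e' A)" .
qed

lemma PK:
  fixes a b :: "nat \<Rightarrow> real" and M :: nat
  assumes k: "0 < k"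
    and smu: "sets \<mu> = sets (mborel (Rk k) (dinf k))" and pmu: "prob_space \<mu>"
    and snu: "sets \<nu> = sets (mborel (Rk k) (dinf k))"
    and ms: "\<And>n. n \<in> {1..M} \<Longrightarrow> sets (\<mu>s n) = sets (mborel (Rk k) (dinf k)) \<and> prob_space (\<mu>s n) \<and>
        sets (\<nu>s n) = sets (mborel (Rk k) (dinf k)) \<and> prob_space (\<nu>s n)"
    and low: "\<And>A. A \<in> sets (mborel (Rk k) (dinf k)) \<Longrightarrow> (\<Sum>n=1..M. a n * measure (\<mu>s n) A) \<le> measure \<mu> A"
    and up: "\<And>A. A \<in> sets (mborel (Rk k) (dinf k)) \<Longrightarrow> measure \<nu> A \<le> (\<Sum>n=1..M. b n * measure (\<nu>s n) A) + tb"
    and a0: "\<And>n. n \<in> {1..M} \<Longrightarrow> 0 \<le> a n" and asum: "(\<Sum>n=1..M. a n) \<le> 1"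
    and e: "\<And>n. n \<in> {1..M} \<Longrightarrow> e \<in> Pset k (\<mu>s n) (\<nu>s n)" and epos: "0 < e"
    and c: "(\<Sum>n=1..M. \<bar>a n - b n\<bar>) \<le> c" and tb: "0 \<le> tb"
  shows "dP k \<mu> \<nu> \<le> e + c + tb"
proof (rule dP_le)
  have "0 \<le> (\<Sum>n=1..M. \<bar>a n - b n\<bar>)" by (rule sum_nonneg) simp
  then have c0: "0 \<le> c" using c by linarith
  show "e + c + tb \<in> Pset k \<mu> \<nu>"
    unfolding Pset_def
  proof (intro CollectI conjI ballI)
    show "0 < e + c + tb" using epos c0 tb by simp
    fix A assume A: "A \<in> sets \<nu>"
    then have AK: "A \<in> sets (mborel (Rk k) (dinf k))" using snu by simp
    let ?E = "e + c + tb"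
    interpret pm: prob_space \<mu> by (rule pmu)
    have "measure \<mu> (nbhd k e A) \<le> measure \<mu> (nbhd k ?E A)"
      using nbhd_mono[of e ?E k A] c0 tb nbhd_sets[OF k] smu by (intro pm.finite_measure_mono) auto
    moreover have "(\<Sum>n=1..M. a n * measure (\<mu>s n) (nbhd k e A)) \<le> measure \<mu> (nbhd k e A)"
      using low[OF nbhd_sets[OF k]] .
    moreover have "(\<Sum>n=1..M. a n * (measure (\<nu>s n) A - e)) \<le> (\<Sum>n=1..M. a n * measure (\<mu>s n) (nbhd k e A))"
    proof (rule sum_mono)
      fix n assume n: "n \<in> {1..M}"
      have "A \<in> sets (\<nu>s n)" using ms[OF n] AK by simp
      then have "measure (\<nu>s n) A - e \<le> measure (\<mu>s n) (nbhd k e A)" using e[OF n] unfolding Pset_def by auto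
      then show "a n * (measure (\<nu>s n) A - e) \<le> a n * measure (\<mu>s n) (nbhd k e A)"
        using a0[OF n] by (rule mult_left_mono)
    qed
    moreover have "(\<Sum>n=1..M. a n * (measure (\<nu>s n) A - e)) = (\<Sum>n=1..M. a n * measure (\<nu>s n) A) - e * (\<Sum>n=1..M. a n)"
    proof -
      have "(\<Sum>n=1..M. a n * (measure (\<nu>s n) A - e)) = (\<Sum>n=1..M. a n * measure (\<nu>s n) A - a n * e)"
        by (simp add: right_diff_distrib)
      also have "\<dots> = (\<Sum>n=1..M. a n * measure (\<nu>s n) A) - (\<Sum>n=1..M. a n * e)" by (rule sum_subtractf)
      also have "(\<Sum>n=1..M. a n * e) = (\<Sum>n=1..M. a n) * e" by (rule sum_distrib_right[symmetric])
      finally show ?thesis by (simp only: mult.commute[of _ e])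
    qed
    moreover have "e * (\<Sum>n=1..M. a n) \<le> e" using asum epos by (simp add: mult_le_cancel_left1)
    moreover have "(\<Sum>n=1..M. b n * measure (\<nu>s n) A) - c \<le> (\<Sum>n=1..M. a n * measure (\<nu>s n) A)"
    proof -
      have "(\<Sum>n=1..M. b n * measure (\<nu>s n) A - a n * measure (\<nu>s n) A) \<le> (\<Sum>n=1..M. \<bar>a n - b n\<bar>)"
      proof (rule sum_mono)
        fix n assume n: "n \<in> {1..M}"
        interpret pn: prob_space "\<nu>s n" using ms[OF n] by simp
        have m01: "0 \<le> measure (\<nu>s n) A" "measure (\<nu>s n) A \<le> 1" by auto
        have "b n * measure (\<nu>s n) A - a n * measure (\<nu>s n) A = (b n - a n) * measure (\<nu>s n) A"
          by (simp add: algebra_simps)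
        also have "\<dots> \<le> \<bar>a n - b n\<bar> * measure (\<nu>s n) A" using m01 by (intro mult_right_mono) auto
        also have "\<dots> \<le> \<bar>a n - b n\<bar>" using m01 by (simp add: mult_left_le)
        finally show "b n * measure (\<nu>s n) A - a n * measure (\<nu>s n) A \<le> \<bar>a n - b n\<bar>" .
      qed
      then show ?thesis using c by (simp add: sum_subtractf)
    qed
    moreover have "measure \<nu> A \<le> (\<Sum>n=1..M. b n * measure (\<nu>s n) A) + tb" using up[OF AK] .
    ultimately show "measure \<nu> A - ?E \<le> measure \<mu> (nbhd k ?E A)" by linarith
  qed
qed

lemma idx_M: "enat M \<le> N \<Longrightarrow> {1..M} \<subseteq> idx N"
  unfolding idx_def by (auto intro: order_trans[rotated])

lemma partial_le:
  fixes g :: "nat \<Rightarrow> real"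
  assumes "(g has_sum s) (idx N)" "\<And>n. n \<in> idx N \<Longrightarrow> 0 \<le> g n" "enat M \<le> N"
  shows "(\<Sum>n=1..M. g n) \<le> s"
proof -
  have "(g has_sum (\<Sum>n=1..M. g n)) {1..M}" by (rule has_sum_finite) simp
  then show ?thesis by (rule has_sum_mono_neutral[OF _ assms(1)]) (use assms idx_M[OF assms(3)] in auto)
qed

lemma split_bound:
  fixes g b :: "nat \<Rightarrow> real"
  assumes b: "in_A1 b N" and M: "enat M \<le> N" and g: "(g has_sum s) (idx N)"
    and gb: "\<And>n. n \<in> idx N \<Longrightarrow> g n \<le> b n"
  shows "s \<le> (\<Sum>n=1..M. g n) + infsum b {n \<in> idx N. M < n}"
proof -
  have bs: "(b has_sum 1) (idx N)" using b unfolding in_A1_def by simp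
  have "b summable_on {n \<in> idx N. M < n}"
    using has_sum_imp_summable[OF bs] by (rule summable_on_subset) auto
  then have bt: "(b has_sum infsum b {n \<in> idx N. M < n}) {n \<in> idx N. M < n}" by (rule has_sum_infsum)
  define h1 where "h1 n = (if n \<le> M then g n else 0)" for n
  define h2 where "h2 n = (if n \<le> M then 0 else b n)" for n
  have "(g has_sum (\<Sum>n=1..M. g n)) {1..M}" by (rule has_sum_finite) simp
  then have H1: "(h1 has_sum (\<Sum>n=1..M. g n)) (idx N)"
    using idx_M[OF M] by (subst has_sum_cong_neutral[where g=g and T="{1..M}"]) (auto simp: h1_def idx_def)
  have H2: "(h2 has_sum infsum b {n \<in> idx N. M < n}) (idx N)"
    using bt by (subst has_sum_cong_neutral[where g=b and T="{n \<in> idx N. M < n}"]) (auto simp: h2_def)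
  have H: "((\<lambda>n. h1 n + h2 n) has_sum ((\<Sum>n=1..M. g n) + infsum b {n \<in> idx N. M < n})) (idx N)"
    by (rule has_sum_add[OF H1 H2])
  show ?thesis
    by (rule has_sum_mono_neutral[OF g H]) (use gb in \<open>auto simp: h1_def h2_def\<close>)
qed

lemma l1_bound:
  assumes a: "in_A1 a N" and b: "in_A1 b N'" and M: "enat M \<le> N" "enat M \<le> N'"
  shows "(\<Sum>n=1..M. \<bar>a n - b n\<bar>) \<le> l1dist a N b N'"
proof -
  have pa: "pad a N summable_on UNIV" using has_sum_imp_summable[OF pad_has_sum[OF a]] .
  have pb: "pad b N' summable_on UNIV" using has_sum_imp_summable[OF pad_has_sum[OF b]] .
  have "(\<lambda>n. pad a N n + (- pad b N' n)) summable_on UNIV"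
    using summable_on_add[OF pa summable_on_uminus[THEN iffD2, OF pb]] .
  then have "(\<lambda>n. pad a N n - pad b N' n) summable_on UNIV" by simp
  then have "(\<lambda>n. \<bar>pad a N n - pad b N' n\<bar>) summable_on UNIV"
    using summable_on_iff_abs_summable_on_real[THEN iffD1] by simp
  then have s1: "(\<lambda>n. \<bar>pad a N n - pad b N' n\<bar>) summable_on {1..}"
    by (rule summable_on_subset) auto
  have "(\<Sum>n=1..M. \<bar>a n - b n\<bar>) = (\<Sum>n=1..M. \<bar>pad a N n - pad b N' n\<bar>)"
    using idx_M[OF M(1)] idx_M[OF M(2)] by (intro sum.cong) (auto simp: pad_def)
  also have "\<dots> = infsum (\<lambda>n. \<bar>pad a N n - pad b N' n\<bar>) {1..M}" by simp
  also have "\<dots> \<le> infsum (\<lambda>n. \<bar>pad a N n - pad b N' n\<bar>) {1..}"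
    by (rule infsum_mono_neutral[OF _ s1]) auto
  finally show ?thesis unfolding l1dist_def .
qed

section \<open>Hausdorff distance facts\<close>

lemma Mset_prob: "m \<in> Mset P k \<Longrightarrow> sets m = sets (mborel (Rk k) (dinf k)) \<and> prob_space m"
  unfolding Mset_def by auto

lemma INF_dP_bdd: "bdd_below ((\<lambda>\<nu>. dP k \<mu> \<nu>) ` T)" if "\<forall>\<nu>\<in>T. prob_space \<nu>"
  using that dP_nonneg by (intro bdd_belowI[of _ 0]) auto

lemma INF_dP_bdd2: "bdd_below ((\<lambda>\<mu>. dP k \<mu> \<nu>) ` S)" if "prob_space \<nu>"
  using that dP_nonneg by (intro bdd_belowI[of _ 0]) auto

lemma INF_dP_01:
  assumes T: "T \<noteq> {}" "\<forall>\<nu>\<in>T. prob_space \<nu>"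
  shows "0 \<le> (INF \<nu>\<in>T. dP k \<mu> \<nu>)" "(INF \<nu>\<in>T. dP k \<mu> \<nu>) \<le> 1"
proof -
  show "0 \<le> (INF \<nu>\<in>T. dP k \<mu> \<nu>)" using T dP_nonneg by (intro cINF_greatest) auto
  obtain \<nu> where "\<nu> \<in> T" using T by blast
  then have "(INF \<nu>\<in>T. dP k \<mu> \<nu>) \<le> dP k \<mu> \<nu>" using INF_dP_bdd[OF T(2)] by (intro cINF_lower)
  also have "\<dots> \<le> 1" using \<open>\<nu> \<in> T\<close> T dP_le1 by auto
  finally show "(INF \<nu>\<in>T. dP k \<mu> \<nu>) \<le> 1" .
qed

lemma INF_dP_01':
  assumes S: "S \<noteq> {}" and p: "prob_space \<nu>"
  shows "0 \<le> (INF \<mu>\<in>S. dP k \<mu> \<nu>)" "(INF \<mu>\<in>S. dP k \<mu> \<nu>) \<le> 1"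
proof -
  show "0 \<le> (INF \<mu>\<in>S. dP k \<mu> \<nu>)" using S dP_nonneg[OF p] by (intro cINF_greatest) auto
  obtain \<mu> where "\<mu> \<in> S" using S by blast
  then have "(INF \<mu>\<in>S. dP k \<mu> \<nu>) \<le> dP k \<mu> \<nu>" using INF_dP_bdd2[OF p] by (intro cINF_lower)
  also have "\<dots> \<le> 1" using dP_le1[OF p] .
  finally show "(INF \<mu>\<in>S. dP k \<mu> \<nu>) \<le> 1" .
qed

context
  fixes S T :: "(nat \<Rightarrow> real) measure set" and k :: nat
  assumes S: "S \<noteq> {}" "\<forall>\<mu>\<in>S. prob_space \<mu>" and T: "T \<noteq> {}" "\<forall>\<nu>\<in>T. prob_space \<nu>"
begin

lemma bddA1: "bdd_above ((\<lambda>\<mu>. INF \<nu>\<in>T. dP k \<mu> \<nu>) ` S)"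
  using INF_dP_01(2)[OF T] by (intro bdd_aboveI[of _ 1]) auto

lemma bddA2: "bdd_above ((\<lambda>\<nu>. INF \<mu>\<in>S. dP k \<mu> \<nu>) ` T)"
  using INF_dP_01'(2)[OF S(1)] T(2) by (intro bdd_aboveI[of _ 1]) auto

lemma dH_01: "0 \<le> dH k S T" "dH k S T \<le> 1"
proof -
  obtain \<mu> where \<mu>: "\<mu> \<in> S" using S by blast
  have "0 \<le> (INF \<nu>\<in>T. dP k \<mu> \<nu>)" by (rule INF_dP_01(1)[OF T])
  also have "\<dots> \<le> (SUP \<mu>\<in>S. INF \<nu>\<in>T. dP k \<mu> \<nu>)" using \<mu> bddA1 by (intro cSUP_upper)
  also have "\<dots> \<le> dH k S T" unfolding dH_def by simp
  finally show "0 \<le> dH k S T" .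
  have "(SUP \<mu>\<in>S. INF \<nu>\<in>T. dP k \<mu> \<nu>) \<le> 1" using S(1) INF_dP_01(2)[OF T] by (intro cSUP_least) auto
  moreover have "(SUP \<nu>\<in>T. INF \<mu>\<in>S. dP k \<mu> \<nu>) \<le> 1" using T INF_dP_01'(2)[OF S(1)] by (intro cSUP_least) auto
  ultimately show "dH k S T \<le> 1" unfolding dH_def by simp
qed

lemma dH_first: "\<mu> \<in> S \<Longrightarrow> (INF \<nu>\<in>T. dP k \<mu> \<nu>) \<le> dH k S T"
  unfolding dH_def using bddA1 by (intro order_trans[OF cSUP_upper max.cobounded1])

lemma dH_second: "\<nu> \<in> T \<Longrightarrow> (INF \<mu>\<in>S. dP k \<mu> \<nu>) \<le> dH k S T"
  unfolding dH_def using bddA2 by (intro order_trans[OF cSUP_upper max.cobounded2])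

lemma dH_leI:
  assumes "\<And>\<mu>. \<mu> \<in> S \<Longrightarrow> \<forall>\<epsilon>>0. \<exists>\<nu>\<in>T. dP k \<mu> \<nu> \<le> C + \<epsilon>"
    and "\<And>\<nu>. \<nu> \<in> T \<Longrightarrow> \<forall>\<epsilon>>0. \<exists>\<mu>\<in>S. dP k \<mu> \<nu> \<le> C + \<epsilon>"
  shows "dH k S T \<le> C"
proof -
  have "(INF \<nu>\<in>T. dP k \<mu> \<nu>) \<le> C" if \<mu>: "\<mu> \<in> S" for \<mu>
  proof (rule field_le_epsilon)
    fix \<epsilon> :: real assume "0 < \<epsilon>"
    then obtain \<nu> where "\<nu> \<in> T" "dP k \<mu> \<nu> \<le> C + \<epsilon>" using assms(1)[OF \<mu>] by blast
    then show "(INF \<nu>\<in>T. dP k \<mu> \<nu>) \<le> C + \<epsilon>" using INF_dP_bdd[OF T(2)] by (intro cINF_lower2)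
  qed
  then have 1: "(SUP \<mu>\<in>S. INF \<nu>\<in>T. dP k \<mu> \<nu>) \<le> C" using S(1) by (intro cSUP_least) auto
  have "(INF \<mu>\<in>S. dP k \<mu> \<nu>) \<le> C" if \<nu>: "\<nu> \<in> T" for \<nu>
  proof (rule field_le_epsilon)
    fix \<epsilon> :: real assume "0 < \<epsilon>"
    then obtain \<mu> where "\<mu> \<in> S" "dP k \<mu> \<nu> \<le> C + \<epsilon>" using assms(2)[OF \<nu>] by blast
    then show "(INF \<mu>\<in>S. dP k \<mu> \<nu>) \<le> C + \<epsilon>" using INF_dP_bdd2 T(2) \<nu> by (intro cINF_lower2) auto
  qed
  then have 2: "(SUP \<nu>\<in>T. INF \<mu>\<in>S. dP k \<mu> \<nu>) \<le> C" using T(1) by (intro cSUP_least) auto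
  show ?thesis unfolding dH_def using 1 2 by simp
qed

lemma pick1: "\<mu> \<in> S \<Longrightarrow> 0 < \<epsilon> \<Longrightarrow> \<exists>\<nu>\<in>T. \<exists>e\<in>Pset k \<mu> \<nu>. e < dH k S T + \<epsilon>"
proof -
  assume \<mu>: "\<mu> \<in> S" and e: "0 < \<epsilon>"
  have "(INF \<nu>\<in>T. dP k \<mu> \<nu>) < dH k S T + \<epsilon>" using dH_first[OF \<mu>] e by simp
  then obtain \<nu> where \<nu>: "\<nu> \<in> T" "dP k \<mu> \<nu> < dH k S T + \<epsilon>"
    using cInf_lessD[of "(\<lambda>\<nu>. dP k \<mu> \<nu>) ` T" "dH k S T + \<epsilon>"] T(1) by blast
  then show ?thesis using dP_lessD T(2) by blast
qed

lemma pick2: "\<nu> \<in> T \<Longrightarrow> 0 < \<epsilon> \<Longrightarrow> \<exists>\<mu>\<in>S. \<exists>e\<in>Pset k \<mu> \<nu>. e < dH k S T + \<epsilon>"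
proof -
  assume \<nu>: "\<nu> \<in> T" and e: "0 < \<epsilon>"
  have p: "prob_space \<nu>" using \<nu> T by auto
  have "(INF \<mu>\<in>S. dP k \<mu> \<nu>) < dH k S T + \<epsilon>" using dH_second[OF \<nu>] e by simp
  then obtain \<mu> where \<mu>: "\<mu> \<in> S" "dP k \<mu> \<nu> < dH k S T + \<epsilon>"
    using cInf_lessD[of "(\<lambda>\<mu>. dP k \<mu> \<nu>) ` S" "dH k S T + \<epsilon>"] S(1) by blast
  then show ?thesis using dP_lessD[OF p] by blast
qed

end

lemma half:
  fixes a b :: "nat \<Rightarrow> real" and M :: nat
  assumes k: "0 < k" and a: "in_A1 a N" and b: "in_A1 b N'"
    and MN: "enat M \<le> N" and MN': "enat M \<le> N'"
    and mu: "\<mu> \<in> Mset PP k" and nu: "\<nu> \<in> Mset QQ k"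
    and mus: "\<And>n. n \<in> idx N \<Longrightarrow> \<mu>s n \<in> Mset (P n) k"
    and muh: "\<And>A. A \<in> sets (mborel (Rk k) (dinf k)) \<Longrightarrow> ((\<lambda>n. a n * measure (\<mu>s n) A) has_sum measure \<mu> A) (idx N)"
    and nus: "\<And>n. n \<in> idx N' \<Longrightarrow> \<nu>s n \<in> Mset (Q n) k"
    and nuh: "\<And>A. A \<in> sets (mborel (Rk k) (dinf k)) \<Longrightarrow> ((\<lambda>n. b n * measure (\<nu>s n) A) has_sum measure \<nu> A) (idx N')"
    and e: "\<And>n. n \<in> {1..M} \<Longrightarrow> e \<in> Pset k (\<mu>s n) (\<nu>s n)" and epos: "0 < e"
  shows "dP k \<mu> \<nu> \<le> e + (l1dist a N b N' + infsum a {n \<in> idx N. M < n} + infsum b {n \<in> idx N'. M < n})"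
proof -
  have a0: "0 \<le> a n" if "n \<in> idx N" for n using a that unfolding in_A1_def by (auto simp: less_imp_le)
  have b0: "0 \<le> b n" if "n \<in> idx N'" for n using b that unfolding in_A1_def by (auto simp: less_imp_le)
  have ta: "0 \<le> infsum a {n \<in> idx N. M < n}" using a0 by (intro infsum_nonneg) auto
  have tb: "0 \<le> infsum b {n \<in> idx N'. M < n}" using b0 by (intro infsum_nonneg) auto
  have "dP k \<mu> \<nu> \<le> e + l1dist a N b N' + infsum b {n \<in> idx N'. M < n}"
  proof (rule PK[OF k])
    show "sets \<mu> = sets (mborel (Rk k) (dinf k))" "prob_space \<mu>" using Mset_prob[OF mu] by auto
    show "sets \<nu> = sets (mborel (Rk k) (dinf k))" using Mset_prob[OF nu] by auto
    fix n assume n: "n \<in> {1..M}"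
    then have "n \<in> idx N" "n \<in> idx N'" using idx_M[OF MN] idx_M[OF MN'] by auto
    then show "sets (\<mu>s n) = sets (mborel (Rk k) (dinf k)) \<and> prob_space (\<mu>s n) \<and>
        sets (\<nu>s n) = sets (mborel (Rk k) (dinf k)) \<and> prob_space (\<nu>s n)"
      using Mset_prob[OF mus] Mset_prob[OF nus] by auto
    show "0 \<le> a n" using a0 \<open>n \<in> idx N\<close> by blast
    show "e \<in> Pset k (\<mu>s n) (\<nu>s n)" using e[OF n] .
  next
    fix A assume A: "A \<in> sets (mborel (Rk k) (dinf k))"
    show "(\<Sum>n=1..M. a n * measure (\<mu>s n) A) \<le> measure \<mu> A"
      by (rule partial_le[OF muh[OF A] _ MN]) (use a0 in \<open>auto intro!: mult_nonneg_nonneg\<close>)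
    show "measure \<nu> A \<le> (\<Sum>n=1..M. b n * measure (\<nu>s n) A) + infsum b {n \<in> idx N'. M < n}"
    proof (rule split_bound[OF b MN' nuh[OF A]])
      fix n assume n: "n \<in> idx N'"
      interpret prob_space "\<nu>s n" using Mset_prob[OF nus[OF n]] by simp
      show "b n * measure (\<nu>s n) A \<le> b n" using b0[OF n] by (simp add: mult_left_le)
    qed
  next
    have "(a has_sum 1) (idx N)" using a unfolding in_A1_def by simp
    then show "(\<Sum>n=1..M. a n) \<le> 1" by (rule partial_le[OF _ _ MN]) (use a0 in auto)
    show "0 < e" by (fact epos)
    show "(\<Sum>n=1..M. \<bar>a n - b n\<bar>) \<le> l1dist a N b N'" by (rule l1_bound[OF a b MN MN'])
    show "0 \<le> infsum b {n \<in> idx N'. M < n}" by (fact tb)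
  qed
  then show ?thesis using ta by simp
qed

lemma Mset_dirsum_nonempty:
  assumes k: "0 < k" and pyr: "\<forall>n\<in>idx N. pyramid (P n)" and a: "in_A1 a N"
  shows "Mset (dirsum P a N) k \<noteq> {}"
proof -
  have "\<forall>n\<in>idx N. (SOME m. m \<in> Mset (P n) k) \<in> Mset (P n) k"
    using Mset_nonempty[OF k] pyr by (metis ex_in_conv someI_ex)
  then have "mix k a N (\<lambda>n. SOME m. m \<in> Mset (P n) k) \<in> Mset (dirsum P a N) k" by (rule build[OF k pyr a])
  then show ?thesis by blast
qed

lemma MK:
  fixes a b :: "nat \<Rightarrow> real" and M :: nat
  assumes k: "0 < k" and a: "in_A1 a N" and b: "in_A1 b N'"
    and pP: "\<forall>n\<in>idx N. pyramid (P n)" and pQ: "\<forall>n\<in>idx N'. pyramid (Q n)"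
    and MN: "enat M \<le> N" and MN': "enat M \<le> N'"
  shows "dH k (Mset (dirsum P a N) k) (Mset (dirsum Q b N') k) \<le>
    (\<Sum>n=1..M. dH k (Mset (P n) k) (Mset (Q n) k)) +
    (l1dist a N b N' + infsum a {n \<in> idx N. M < n} + infsum b {n \<in> idx N'. M < n})"
proof -
  let ?S = "Mset (dirsum P a N) k" and ?T = "Mset (dirsum Q b N') k"
  let ?H = "\<lambda>n. dH k (Mset (P n) k) (Mset (Q n) k)"
  let ?c = "l1dist a N b N' + infsum a {n \<in> idx N. M < n} + infsum b {n \<in> idx N'. M < n}"
  have SN: "?S \<noteq> {}" by (rule Mset_dirsum_nonempty[OF k pP a])
  have TN: "?T \<noteq> {}" by (rule Mset_dirsum_nonempty[OF k pQ b])
  have Sp: "\<forall>\<mu>\<in>?S. prob_space \<mu>" using Mset_prob by blast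
  have Tp: "\<forall>\<nu>\<in>?T. prob_space \<nu>" using Mset_prob by blast
  have inN: "n \<in> idx N" "n \<in> idx N'" if "n \<in> {1..M}" for n
    using that idx_M[OF MN] idx_M[OF MN'] by auto
  have PN: "Mset (P n) k \<noteq> {}" if "n \<in> idx N" for n using Mset_nonempty[OF k] pP that by blast
  have QN: "Mset (Q n) k \<noteq> {}" if "n \<in> idx N'" for n using Mset_nonempty[OF k] pQ that by blast
  have H0: "0 \<le> ?H n" if "n \<in> {1..M}" for n
    using dH_01(1)[OF PN[OF inN(1)[OF that]] _ QN[OF inN(2)[OF that]]] Mset_prob[of _ "P n" k] Mset_prob[of _ "Q n" k]
    using that by blast
  have Hle: "?H n \<le> (\<Sum>n=1..M. ?H n)" if "n \<in> {1..M}" for n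
    using H0 that by (intro member_le_sum) auto
  have Hs0: "0 \<le> (\<Sum>n=1..M. ?H n)" using H0 by (intro sum_nonneg) auto
  show ?thesis
  proof (rule dH_leI[OF SN Sp TN Tp])
    fix \<mu> assume mu: "\<mu> \<in> ?S"
    show "\<forall>\<epsilon>>0. \<exists>\<nu>\<in>?T. dP k \<mu> \<nu> \<le> (\<Sum>n=1..M. ?H n) + ?c + \<epsilon>"
    proof (intro allI impI)
      fix \<epsilon> :: real assume eps: "0 < \<epsilon>"
      obtain \<mu>s where mus: "\<forall>n\<in>idx N. \<mu>s n \<in> Mset (P n) k"
        and muh: "\<forall>A\<in>sets (mborel (Rk k) (dinf k)). ((\<lambda>n. a n * measure (\<mu>s n) A) has_sum measure \<mu> A) (idx N)"
        using decomp[OF k pP mu] by blast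
      have "\<forall>n\<in>{1..M}. \<exists>\<nu>'. \<nu>' \<in> Mset (Q n) k \<and> (\<exists>e\<in>Pset k (\<mu>s n) \<nu>'. e < ?H n + \<epsilon>)"
      proof
        fix n assume n: "n \<in> {1..M}"
        show "\<exists>\<nu>'. \<nu>' \<in> Mset (Q n) k \<and> (\<exists>e\<in>Pset k (\<mu>s n) \<nu>'. e < ?H n + \<epsilon>)"
          using pick1[OF PN[OF inN(1)[OF n]] _ QN[OF inN(2)[OF n]] _ _ eps, of "\<mu>s n"] mus inN[OF n]
            Mset_prob[of _ "P n" k] Mset_prob[of _ "Q n" k] by blast
      qed
      then obtain \<nu>' where nu': "\<forall>n\<in>{1..M}. \<nu>' n \<in> Mset (Q n) k \<and> (\<exists>e\<in>Pset k (\<mu>s n) (\<nu>' n). e < ?H n + \<epsilon>)"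
        by metis
      define \<nu>s where "\<nu>s n = (if n \<in> {1..M} then \<nu>' n else (SOME m. m \<in> Mset (Q n) k))" for n
      have nus: "\<nu>s n \<in> Mset (Q n) k" if "n \<in> idx N'" for n
      proof (cases "n \<in> {1..M}")
        case True then show ?thesis using nu' unfolding \<nu>s_def by auto
      next
        case False
        then have "\<nu>s n = (SOME m. m \<in> Mset (Q n) k)" unfolding \<nu>s_def by (rule if_not_P)
        then show ?thesis using QN[OF that] by (simp add: some_in_eq)
      qed
      let ?\<nu> = "mix k b N' \<nu>s"
      have nu: "?\<nu> \<in> ?T" using build[OF k pQ b] nus by blast
      have msp: "sets (\<nu>s n) = sets (mborel (Rk k) (dinf k)) \<and> prob_space (\<nu>s n)" if "n \<in> idx N'" for n
        using Mset_prob[OF nus[OF that]] .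
      have nuh: "((\<lambda>n. b n * measure (\<nu>s n) A) has_sum measure ?\<nu> A) (idx N')"
        if "A \<in> sets (mborel (Rk k) (dinf k))" for A by (rule mix(3)[OF k b msp that])
      have E: "(\<Sum>n=1..M. ?H n) + \<epsilon> \<in> Pset k (\<mu>s n) (\<nu>s n)" if n: "n \<in> {1..M}" for n
      proof -
        obtain e where e: "e \<in> Pset k (\<mu>s n) (\<nu>' n)" "e < ?H n + \<epsilon>" using nu' n by blast
        have "\<mu>s n \<in> Mset (P n) k" using mus inN[OF n] by blast
        then show ?thesis using Pset_up[OF k _ _ e(1)] e(2) Hle[OF n] Mset_prob n unfolding \<nu>s_def by auto
      qed
      have "dP k \<mu> ?\<nu> \<le> ((\<Sum>n=1..M. ?H n) + \<epsilon>) + ?c"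
        by (rule half[OF k a b MN MN' mu nu, of \<mu>s P \<nu>s Q])
          (use mus muh nus nuh E eps Hs0 in \<open>auto simp: add_nonneg_pos\<close>)
      then show "\<exists>\<nu>\<in>?T. dP k \<mu> \<nu> \<le> (\<Sum>n=1..M. ?H n) + ?c + \<epsilon>" using nu by (intro bexI[of _ ?\<nu>]) auto
    qed
  next
    fix \<nu> assume nu: "\<nu> \<in> ?T"
    show "\<forall>\<epsilon>>0. \<exists>\<mu>\<in>?S. dP k \<mu> \<nu> \<le> (\<Sum>n=1..M. ?H n) + ?c + \<epsilon>"
    proof (intro allI impI)
      fix \<epsilon> :: real assume eps: "0 < \<epsilon>"
      obtain \<nu>s where nus: "\<forall>n\<in>idx N'. \<nu>s n \<in> Mset (Q n) k"
        and nuh: "\<forall>A\<in>sets (mborel (Rk k) (dinf k)). ((\<lambda>n. b n * measure (\<nu>s n) A) has_sum measure \<nu> A) (idx N')"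
        using decomp[OF k pQ nu] by blast
      have "\<forall>n\<in>{1..M}. \<exists>\<mu>'. \<mu>' \<in> Mset (P n) k \<and> (\<exists>e\<in>Pset k \<mu>' (\<nu>s n). e < ?H n + \<epsilon>)"
      proof
        fix n assume n: "n \<in> {1..M}"
        show "\<exists>\<mu>'. \<mu>' \<in> Mset (P n) k \<and> (\<exists>e\<in>Pset k \<mu>' (\<nu>s n). e < ?H n + \<epsilon>)"
          using pick2[OF PN[OF inN(1)[OF n]] _ QN[OF inN(2)[OF n]] _ _ eps, of "\<nu>s n"] nus inN[OF n]
            Mset_prob[of _ "P n" k] Mset_prob[of _ "Q n" k] by blast
      qed
      then obtain \<mu>' where mu': "\<forall>n\<in>{1..M}. \<mu>' n \<in> Mset (P n) k \<and> (\<exists>e\<in>Pset k (\<mu>' n) (\<nu>s n). e < ?H n + \<epsilon>)"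
        by metis
      define \<mu>s where "\<mu>s n = (if n \<in> {1..M} then \<mu>' n else (SOME m. m \<in> Mset (P n) k))" for n
      have mus: "\<mu>s n \<in> Mset (P n) k" if "n \<in> idx N" for n
      proof (cases "n \<in> {1..M}")
        case True then show ?thesis using mu' unfolding \<mu>s_def by auto
      next
        case False
        then have "\<mu>s n = (SOME m. m \<in> Mset (P n) k)" unfolding \<mu>s_def by (rule if_not_P)
        then show ?thesis using PN[OF that] by (simp add: some_in_eq)
      qed
      let ?\<mu> = "mix k a N \<mu>s"
      have mu: "?\<mu> \<in> ?S" using build[OF k pP a] mus by blast
      have msp: "sets (\<mu>s n) = sets (mborel (Rk k) (dinf k)) \<and> prob_space (\<mu>s n)" if "n \<in> idx N" for n
        using Mset_prob[OF mus[OF that]] .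
      have muh: "((\<lambda>n. a n * measure (\<mu>s n) A) has_sum measure ?\<mu> A) (idx N)"
        if "A \<in> sets (mborel (Rk k) (dinf k))" for A by (rule mix(3)[OF k a msp that])
      have E: "(\<Sum>n=1..M. ?H n) + \<epsilon> \<in> Pset k (\<mu>s n) (\<nu>s n)" if n: "n \<in> {1..M}" for n
      proof -
        obtain e where e: "e \<in> Pset k (\<mu>' n) (\<nu>s n)" "e < ?H n + \<epsilon>" using mu' n by blast
        have "\<mu>' n \<in> Mset (P n) k" using mu' n by blast
        then show ?thesis using Pset_up[OF k _ _ e(1)] e(2) Hle[OF n] Mset_prob n unfolding \<mu>s_def by auto
      qed
      have "dP k ?\<mu> \<nu> \<le> ((\<Sum>n=1..M. ?H n) + \<epsilon>) + ?c"
        by (rule half[OF k a b MN MN' mu nu, of \<mu>s P \<nu>s Q])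
          (use mus muh nus nuh E eps Hs0 in \<open>auto simp: add_nonneg_pos\<close>)
      then show "\<exists>\<mu>\<in>?S. dP k \<mu> \<nu> \<le> (\<Sum>n=1..M. ?H n) + ?c + \<epsilon>" using mu by (intro bexI[of _ ?\<mu>]) auto
    qed
  qed
qed

lemma Mset_prob_all: "\<forall>m\<in>Mset P k. prob_space m" using Mset_prob by blast

lemma weights:
  defines "w \<equiv> \<lambda>k::nat. (1 / 2 ^ Suc k) * (1 / (2 * real (Suc k)))"
  shows "\<And>k. 0 \<le> w k" "summable w" "suminf w \<le> 1 / 2"
proof -
  show w0: "0 \<le> w k" for k unfolding w_def by simp
  have wle: "w k \<le> (1/2)^k / 4" for k
  proof -
    have "1 / (2 * real (Suc k)) \<le> 1 / 2" by (simp add: field_simps)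
    then have "w k \<le> (1 / 2 ^ Suc k) * (1 / 2)" unfolding w_def by (intro mult_left_mono) auto
    also have "\<dots> = (1/2)^k / 4" by (simp add: power_divide field_simps)
    finally show ?thesis .
  qed
  have sg: "summable (\<lambda>k. (1/2::real)^k / 4)" by (intro summable_divide summable_geometric) simp
  show sw: "summable w" by (rule summable_comparison_test[OF _ sg]) (use w0 wle in auto)
  have "suminf w \<le> (\<Sum>k. (1/2::real)^k / 4)" by (rule suminf_le[OF wle sw sg])
  also have "\<dots> = (\<Sum>k. (1/2::real)^k) / 4" by (rule suminf_divide) (simp add: summable_geometric)
  also have "\<dots> = 1 / 2" by (simp add: suminf_geometric)
  finally show "suminf w \<le> 1 / 2" .
qed

theorem corollary3p15:
  fixes a b :: "nat \<Rightarrow> real" and N N' :: enat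
    and P Q :: "nat \<Rightarrow> real mms set" and M :: nat
  assumes "in_A1 a N" and "in_A1 b N'"
    and "\<forall>n\<in>idx N. pyramid (P n)" and "\<forall>n\<in>idx N'. pyramid (Q n)"
    and "1 \<le> M" and "enat M \<le> min N N'"
  shows "rho (dirsum P a N) (dirsum Q b N') \<le>
    (\<Sum>n=1..M. rho (P n) (Q n)) + 1/2 * l1dist a N b N'
    + 1/2 * infsum a {n \<in> idx N. M < n} + 1/2 * infsum b {n \<in> idx N'. M < n}"
proof -
  note a = assms(1) and b = assms(2) and pP = assms(3) and pQ = assms(4)
  have MN: "enat M \<le> N" and MN': "enat M \<le> N'" using assms(6) by auto
  define w where "w = (\<lambda>k::nat. (1 / 2 ^ Suc k) * (1 / (2 * real (Suc k))))"
  have W1: "0 \<le> w k" for k unfolding w_def by simp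
  have W2: "summable w" unfolding w_def by (rule weights(2))
  have W3: "suminf w \<le> 1 / 2" unfolding w_def by (rule weights(3))
  note W = W1 W2 W3
  define c where "c = l1dist a N b N' + infsum a {n \<in> idx N. M < n} + infsum b {n \<in> idx N'. M < n}"
  define D where "D k = dH (Suc k) (Mset (dirsum P a N) (Suc k)) (Mset (dirsum Q b N') (Suc k))" for k
  define H where "H n k = dH (Suc k) (Mset (P n) (Suc k)) (Mset (Q n) (Suc k))" for n k
  have a0: "0 \<le> a n" if "n \<in> idx N" for n using a that unfolding in_A1_def by (auto simp: less_imp_le)
  have b0: "0 \<le> b n" if "n \<in> idx N'" for n using b that unfolding in_A1_def by (auto simp: less_imp_le)
  have c0: "0 \<le> c"
  proof -
    have "0 \<le> (\<Sum>n=1..M. \<bar>a n - b n\<bar>)" by (rule sum_nonneg) simp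
    also have "\<dots> \<le> l1dist a N b N'" by (rule l1_bound[OF a b MN MN'])
    finally have l0: "0 \<le> l1dist a N b N'" .
    have "0 \<le> infsum a {n \<in> idx N. M < n}" using a0 by (intro infsum_nonneg) auto
    moreover have "0 \<le> infsum b {n \<in> idx N'. M < n}" using b0 by (intro infsum_nonneg) auto
    ultimately show ?thesis unfolding c_def using l0 by linarith
  qed
  have inN: "n \<in> idx N" "n \<in> idx N'" if "n \<in> {1..M}" for n
    using that idx_M[OF MN] idx_M[OF MN'] by auto
  have D01: "0 \<le> D k \<and> D k \<le> 1" for k
  proof -
    have k: "0 < Suc k" by simp
    show ?thesis unfolding D_def
      using dH_01[OF Mset_dirsum_nonempty[OF k pP a] Mset_prob_all Mset_dirsum_nonempty[OF k pQ b] Mset_prob_all] by blast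
  qed
  have H01: "0 \<le> H n k \<and> H n k \<le> 1" if n: "n \<in> {1..M}" for n k
  proof -
    have k: "0 < Suc k" by simp
    have ne1: "Mset (P n) (Suc k) \<noteq> {}" using Mset_nonempty[OF k] pP inN[OF n] by blast
    have ne2: "Mset (Q n) (Suc k) \<noteq> {}" using Mset_nonempty[OF k] pQ inN[OF n] by blast
    show ?thesis unfolding H_def using dH_01[OF ne1 Mset_prob_all ne2 Mset_prob_all] by blast
  qed
  have sumc: "summable (\<lambda>k. w k * f k)" if "\<And>k. 0 \<le> f k \<and> f k \<le> 1" for f
  proof (rule summable_comparison_test[OF _ W(2)])
    show "\<exists>N0. \<forall>n\<ge>N0. norm (w n * f n) \<le> w n"
    proof (intro exI[of _ 0] allI impI)
      fix n :: nat
      have "0 \<le> f n" "f n \<le> 1" using that by auto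
      moreover have "0 \<le> w n" by (rule W(1))
      ultimately show "norm (w n * f n) \<le> w n" by (simp add: abs_mult mult_left_le)
    qed
  qed
  have sD: "summable (\<lambda>k. w k * D k)" using sumc D01 by blast
  have sH: "summable (\<lambda>k. w k * H n k)" if "n \<in> {1..M}" for n using sumc H01[OF that] by blast
  have rhoD: "rho (dirsum P a N) (dirsum Q b N') = (\<Sum>k. w k * D k)"
    unfolding rho_def w_def D_def by simp
  have rhoH: "rho (P n) (Q n) = (\<Sum>k. w k * H n k)" for n
    unfolding rho_def w_def H_def by simp
  have MKk: "D k \<le> (\<Sum>n=1..M. H n k) + c" for k
    unfolding D_def H_def c_def by (rule MK[OF _ a b pP pQ MN MN']) simp
  have sS: "summable (\<lambda>k. \<Sum>n=1..M. w k * H n k)" by (rule summable_sum) (rule sH)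
  have sC: "summable (\<lambda>k. w k * c)" by (rule summable_mult2[OF W(2)])
  have "(\<Sum>k. w k * D k) \<le> (\<Sum>k. (\<Sum>n=1..M. w k * H n k) + w k * c)"
  proof (rule suminf_le[OF _ sD])
    fix k
    have "w k * D k \<le> w k * ((\<Sum>n=1..M. H n k) + c)" using MKk W(1) by (rule mult_left_mono)
    also have "\<dots> = (\<Sum>n=1..M. w k * H n k) + w k * c" by (simp add: algebra_simps sum_distrib_left)
    finally show "w k * D k \<le> (\<Sum>n=1..M. w k * H n k) + w k * c" .
    show "summable (\<lambda>k. (\<Sum>n=1..M. w k * H n k) + w k * c)" using summable_add[OF sS sC] .
  qed
  also have "\<dots> = (\<Sum>k. \<Sum>n=1..M. w k * H n k) + (\<Sum>k. w k * c)" using suminf_add[OF sS sC] by simp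
  also have "(\<Sum>k. \<Sum>n=1..M. w k * H n k) = (\<Sum>n=1..M. \<Sum>k. w k * H n k)" by (rule suminf_sum) (rule sH)
  also have "\<dots> = (\<Sum>n=1..M. rho (P n) (Q n))" by (simp add: rhoH)
  also have "(\<Sum>k. w k * c) = suminf w * c" using suminf_mult2[OF W(2), of c] by simp
  also have "suminf w * c \<le> 1 / 2 * c" using W(3) c0 by (rule mult_right_mono)
  finally have "rho (dirsum P a N) (dirsum Q b N') \<le> (\<Sum>n=1..M. rho (P n) (Q n)) + 1 / 2 * c"
    unfolding rhoD by simp
  then show ?thesis unfolding c_def by (simp add: algebra_simps)
qed

end
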